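(* Let $n\ge2$ and $\mathcal N=\mathbb R^{2n}$ with coordinates $(q,p)\in\mathbb R^n\times\mathbb R^n$ and symplectic form $\omega=\sum_{i=1}^n dp_i\wedge dq_i$. Let $H_0(q,p)=\frac12|p|^2+v_0(q)$ and $H(q,p)=H_0(q,p)+v(q)$, where $v_0\in C^\infty(\mathbb R^n)$ and $v\in C_0^\infty(\mathbb R^n)$ satisfy $$\sup_{q}\bigl(v_0(q)+\tfrac12\langle q,\nabla v_0(q)\rangle\bigr)<\infty,\qquad \inf_q v_0(q)>-\infty,$$ and let $E\in\mathbb R$ be such that $E$ is not a critical value of $v_0$ or of $v_0+v$, and $E>\sup_q\bigl(v_0(q)+\frac12\langle q,\nabla v_0(q)\rangle\bigr)$. Fix $R\in\mathbb R$ and let $\Gamma=\{(q,p): H_0(q,p)=E,\ \langle q,p\rangle=R\}\subset A_0(E)$. Then Assumption 1 holds at energy $E$ for the pair $H_0,H$, and Assumption 2 holds with this $\Gamma$.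
   Context: $\langle\cdot,\cdot\rangle$ is the Euclidean inner product on $\mathbb R^n$. For Hamiltonians $H_0,H$, $X_0,X$ are the Hamiltonian vector fields ($\omega(X_0,\cdot)=-dH_0$, $\omega(X,\cdot)=-dH$) with flows $\Phi^0_t,\Phi_t$; $G(E)=\{H\le E\}$, $A(E)=\{H=E\}$, $G_0(E)=\{H_0\le E\}$, $A_0(E)=\{H_0=E\}$. Assumption 1 (at energy $E$): (i) $dH\neq0$ on $A(E)$, $dH_0\ne0$ on $A_0(E)$; (ii) $\Phi^0_t$ on $A_0(E)$ and $\Phi_t$ on $A(E)$ are defined for all $t\in\mathbb R$; (iii) for every compact $K\subset A_0(E)$ there is $T>0$ with $\Phi^0_t(x)\notin K$ for all $x\in K$, $|t|\ge T$; (iv) $G(E)\cap\operatorname{supp}(H-H_0)$ and $G_0(E)\cap\operatorname{supp}(H-H_0)$ are compact. Assumption 2 (for a set $\Gamma$): $\Gamma\subset A_0(E)$ is a smooth submanifold of dimension $2n-2$ such that (a) $X_0(x)\notin T_x\Gamma$ for all $x\in\Gamma$, and (b) for every $x\in A_0(E)$ there exist a unique $z\in\Gamma$ and a unique $t\in\mathbb R$ with $x=\Phi^0_t(z)$. *)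

theory Defs
  imports "HOL-Analysis.Analysis"
begin

coinductive c_inf_on :: "'a::euclidean_space set \<Rightarrow> ('a \<Rightarrow> real) \<Rightarrow> bool"
  for S :: "'a set" where
  "(\<forall>x\<in>S. f differentiable (at x)) \<Longrightarrow>
   (\<forall>b\<in>Basis. c_inf_on S (\<lambda>x. frechet_derivative f (at x) b)) \<Longrightarrow>
   c_inf_on S f"

definition grad :: "(real^'n \<Rightarrow> real) \<Rightarrow> real^'n \<Rightarrow> real^'n" where
  "grad f q = (\<chi> i. frechet_derivative f (at q) (axis i 1))"

definition critical_value :: "(real^'n \<Rightarrow> real) \<Rightarrow> real \<Rightarrow> bool" where
  "critical_value f E \<longleftrightarrow> (\<exists>q. grad f q = 0 \<and> f q = E)"

definition supp :: "('a::topological_space \<Rightarrow> real) \<Rightarrow> 'a set" where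
  "supp f = closure {x. f x \<noteq> 0}"

text \<open>omega = sum_i dp_i wedge dq_i, evaluated on (a,b),(c,d) in (q,p)-components.\<close>
definition symp_form :: "((real^'n) \<times> (real^'n)) \<Rightarrow> ((real^'n) \<times> (real^'n)) \<Rightarrow> real" where
  "symp_form X Y = snd X \<bullet> fst Y - snd Y \<bullet> fst X"

definition ham_vf :: "((real^'n) \<times> (real^'n) \<Rightarrow> real) \<Rightarrow> (real^'n) \<times> (real^'n) \<Rightarrow> (real^'n) \<times> (real^'n)" where
  "ham_vf H x = (THE X. \<forall>Y. symp_form X Y = - frechet_derivative H (at x) Y)"

definition mech_ham :: "(real^'n \<Rightarrow> real) \<Rightarrow> (real^'n) \<times> (real^'n) \<Rightarrow> real" where
  "mech_ham V = (\<lambda>(q,p). (1/2) * (norm p)^2 + V q)"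

definition integral_curve :: "('a::real_normed_vector \<Rightarrow> 'a) \<Rightarrow> (real \<Rightarrow> 'a) \<Rightarrow> 'a \<Rightarrow> bool" where
  "integral_curve X \<gamma> x \<longleftrightarrow> \<gamma> 0 = x \<and> (\<forall>t. (\<gamma> has_vector_derivative X (\<gamma> t)) (at t))"

definition flow_complete_on :: "('a::real_normed_vector \<Rightarrow> 'a) \<Rightarrow> 'a set \<Rightarrow> bool" where
  "flow_complete_on X S \<longleftrightarrow> (\<forall>x\<in>S. \<exists>\<gamma>. integral_curve X \<gamma> x)"

definition flow :: "('a::real_normed_vector \<Rightarrow> 'a) \<Rightarrow> real \<Rightarrow> 'a \<Rightarrow> 'a" where
  "flow X t x = (THE \<gamma>. integral_curve X \<gamma> x) t"

definition smooth_submanifold :: "'a::euclidean_space set \<Rightarrow> nat \<Rightarrow> bool" where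
  "smooth_submanifold M k \<longleftrightarrow> k \<le> DIM('a) \<and>
     (\<forall>x\<in>M. \<exists>U F. open U \<and> x \<in> U \<and>
        (\<forall>i<DIM('a) - k. c_inf_on U (F i)) \<and>
        (\<forall>y\<in>M \<inter> U. \<forall>c::nat \<Rightarrow> real.
            (\<forall>w. (\<Sum>i<DIM('a) - k. c i * frechet_derivative (F i) (at y) w) = 0)
              \<longrightarrow> (\<forall>i<DIM('a) - k. c i = 0)) \<and>
        M \<inter> U = {y\<in>U. \<forall>i<DIM('a) - k. F i y = 0})"

definition tangent_space :: "'a::real_normed_vector set \<Rightarrow> 'a \<Rightarrow> 'a set" where
  "tangent_space M x = {v. \<exists>\<gamma> e. e > 0 \<and> \<gamma> 0 = x \<and> \<gamma> ` {-e<..<e} \<subseteq> M \<and>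
                                 (\<gamma> has_vector_derivative v) (at 0)}"

definition assumption1 ::
  "((real^'n) \<times> (real^'n) \<Rightarrow> real) \<Rightarrow> ((real^'n) \<times> (real^'n) \<Rightarrow> real) \<Rightarrow> real \<Rightarrow> bool" where
  "assumption1 H0 H E \<longleftrightarrow>
     (\<forall>x. H x = E \<longrightarrow> frechet_derivative H (at x) \<noteq> (\<lambda>_. 0)) \<and>
     (\<forall>x. H0 x = E \<longrightarrow> frechet_derivative H0 (at x) \<noteq> (\<lambda>_. 0)) \<and>
     flow_complete_on (ham_vf H0) {x. H0 x = E} \<and>
     flow_complete_on (ham_vf H) {x. H x = E} \<and>
     (\<forall>K. compact K \<and> K \<subseteq> {x. H0 x = E} \<longrightarrow>
        (\<exists>T>0. \<forall>x\<in>K. \<forall>t. \<bar>t\<bar> \<ge> T \<longrightarrow> flow (ham_vf H0) t x \<notin> K)) \<and>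
     compact ({x. H x \<le> E} \<inter> supp (\<lambda>x. H x - H0 x)) \<and>
     compact ({x. H0 x \<le> E} \<inter> supp (\<lambda>x. H x - H0 x))"

definition assumption2 ::
  "((real^'n) \<times> (real^'n) \<Rightarrow> real) \<Rightarrow> real \<Rightarrow> ((real^'n) \<times> (real^'n)) set \<Rightarrow> bool" where
  "assumption2 H0 E \<Gamma> \<longleftrightarrow>
     \<Gamma> \<subseteq> {x. H0 x = E} \<and>
     smooth_submanifold \<Gamma> (2 * CARD('n) - 2) \<and>
     (\<forall>x\<in>\<Gamma>. ham_vf H0 x \<notin> tangent_space \<Gamma> x) \<and>
     (\<forall>x. H0 x = E \<longrightarrow> (\<exists>!zt. fst zt \<in> \<Gamma> \<and> x = flow (ham_vf H0) (snd zt) (fst zt)))"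

end

theory Submission
  imports Defs
begin

lemma ode_unique_interval:
  fixes f :: "'a::real_normed_vector \<Rightarrow> 'a"
  assumes loclip: "\<And>x. \<exists>r>0. \<exists>L. L-lipschitz_on (cball x r) f"
    and I: "is_interval I" "t0 \<in> I"
    and g1: "\<And>t. t \<in> I \<Longrightarrow> (\<gamma>1 has_vector_derivative f (\<gamma>1 t)) (at t within I)"
    and g2: "\<And>t. t \<in> I \<Longrightarrow> (\<gamma>2 has_vector_derivative f (\<gamma>2 t)) (at t within I)"
    and eq0: "\<gamma>1 t0 = \<gamma>2 t0"
  shows "\<forall>t\<in>I. \<gamma>1 t = \<gamma>2 t"
proof -
  define g where "g = (\<lambda>t. \<gamma>1 t - \<gamma>2 t)"
  have c1: "continuous_on I \<gamma>1"
    using g1 has_vector_derivative_continuous continuous_on_eq_continuous_within by blast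
  have c2: "continuous_on I \<gamma>2"
    using g2 has_vector_derivative_continuous continuous_on_eq_continuous_within by blast
  have cg: "continuous_on I g" unfolding g_def by (intro continuous_intros c1 c2)
  define Z where "Z = {t\<in>I. g t = 0}"
  have closedZ: "closedin (top_of_set I) Z"
    unfolding Z_def by (rule continuous_closedin_preimage_constant[OF cg])
  have openZ: "openin (top_of_set I) Z"
    unfolding openin_euclidean_subtopology_iff
  proof (intro conjI ballI)
    show "Z \<subseteq> I" unfolding Z_def by auto
  next
    fix s assume sZ: "s \<in> Z"
    hence sI: "s \<in> I" and gs: "\<gamma>1 s = \<gamma>2 s" unfolding Z_def g_def by auto
    obtain r L where r: "r > 0" and L: "L-lipschitz_on (cball (\<gamma>1 s) r) f"
      using loclip by blast
    have L0: "L \<ge> 0" using L lipschitz_on_nonneg by blast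
    obtain d1 where d1: "d1 > 0" "\<forall>t\<in>I. dist t s < d1 \<longrightarrow> dist (\<gamma>1 t) (\<gamma>1 s) < r"
      using c1 sI r unfolding continuous_on_iff by metis
    obtain d2 where d2: "d2 > 0" "\<forall>t\<in>I. dist t s < d2 \<longrightarrow> dist (\<gamma>2 t) (\<gamma>2 s) < r"
      using c2 sI r unfolding continuous_on_iff by metis
    define h where "h = min (min d1 d2 / 2) (1 / (2 * (L + 1)))"
    have h0: "h > 0" using d1 d2 L0 unfolding h_def by auto
    have hd1: "h < d1" and hd2: "h < d2" using d1 d2 unfolding h_def by auto
    have Lh: "L * h \<le> 1/2"
    proof -
      have "L * h \<le> L * (1 / (2 * (L + 1)))" using L0 unfolding h_def
        by (intro mult_left_mono) auto
      also have "\<dots> \<le> 1/2" using L0 by (simp add: field_simps)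
      finally show ?thesis .
    qed
    define J where "J = I \<inter> cball s h"
    have convJ: "convex J" unfolding J_def
      using I(1) is_interval_convex convex_Int convex_cball by blast
    have sJ: "s \<in> J" unfolding J_def using sI h0 by auto
    have inball: "\<gamma>1 t \<in> cball (\<gamma>1 s) r \<and> \<gamma>2 t \<in> cball (\<gamma>1 s) r" if "t \<in> J" for t
    proof -
      have "t \<in> I" "dist t s < d1" "dist t s < d2" using that hd1 hd2 unfolding J_def
        by (auto simp: dist_commute)
      then show ?thesis using d1 d2 gs by (auto simp: dist_commute less_imp_le)
    qed
    have gbound: "norm (g t) \<le> 2 * r" if "t \<in> J" for t
    proof -
      have "norm (g t) = dist (\<gamma>1 t) (\<gamma>2 t)" unfolding g_def dist_norm by simp
      also have "\<dots> \<le> dist (\<gamma>1 t) (\<gamma>1 s) + dist (\<gamma>2 t) (\<gamma>1 s)" by (rule dist_triangle2)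
      also have "\<dots> \<le> r + r" using inball[OF that] by (auto simp: dist_commute)
      finally show ?thesis by simp
    qed
    define M where "M = Sup ((\<lambda>t. norm (g t)) ` J)"
    have bdd: "bdd_above ((\<lambda>t. norm (g t)) ` J)" using gbound by (auto intro!: bdd_aboveI)
    have leM: "norm (g t) \<le> M" if "t \<in> J" for t
      unfolding M_def using bdd that by (auto intro: cSup_upper)
    have M0: "M \<ge> 0" using leM[OF sJ] norm_ge_zero order_trans by blast
    have derJ: "(g has_derivative (\<lambda>u. u *\<^sub>R (f (\<gamma>1 t) - f (\<gamma>2 t)))) (at t within J)"
      if "t \<in> J" for t
    proof -
      have tI: "t \<in> I" using that unfolding J_def by auto
      have "J \<subseteq> I" unfolding J_def by auto
      have "((\<lambda>t. \<gamma>1 t - \<gamma>2 t) has_vector_derivative (f (\<gamma>1 t) - f (\<gamma>2 t))) (at t within I)"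
        by (intro has_vector_derivative_diff g1 g2 tI)
      then have "(g has_vector_derivative (f (\<gamma>1 t) - f (\<gamma>2 t))) (at t within J)"
        unfolding g_def using has_vector_derivative_within_subset \<open>J \<subseteq> I\<close> by blast
      then show ?thesis by (simp add: has_vector_derivative_def)
    qed
    have onormJ: "onorm (\<lambda>u. u *\<^sub>R (f (\<gamma>1 t) - f (\<gamma>2 t))) \<le> L * M" if "t \<in> J" for t
    proof -
      have "onorm (\<lambda>u::real. u *\<^sub>R (f (\<gamma>1 t) - f (\<gamma>2 t))) = norm (f (\<gamma>1 t) - f (\<gamma>2 t))"
        using onorm_scaleR_left[OF bounded_linear_ident, of "f (\<gamma>1 t) - f (\<gamma>2 t)"]
        by (simp add: onorm_id)
      also have "\<dots> = dist (f (\<gamma>1 t)) (f (\<gamma>2 t))" by (simp add: dist_norm)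
      also have "\<dots> \<le> L * dist (\<gamma>1 t) (\<gamma>2 t)"
        using lipschitz_onD[OF L] inball[OF that] by blast
      also have "\<dots> = L * norm (g t)" unfolding g_def dist_norm by simp
      also have "\<dots> \<le> L * M" using leM[OF that] L0 by (intro mult_left_mono) auto
      finally show ?thesis .
    qed
    have half: "norm (g t) \<le> M / 2" if "t \<in> J" for t
    proof -
      have gs0: "g s = 0" unfolding g_def using gs by simp
      have "norm (g t - g s) \<le> (L * M) * norm (t - s)"
        by (rule differentiable_bound[OF convJ derJ onormJ that sJ])
      also have "\<dots> \<le> (L * M) * h"
        using that L0 M0 unfolding J_def by (intro mult_left_mono) (auto simp: dist_norm norm_minus_commute)
      also have "\<dots> = (L * h) * M" by simp
      also have "\<dots> \<le> (1/2) * M" using Lh M0 by (intro mult_right_mono) auto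
      finally show ?thesis using gs0 by simp
    qed
    have "M \<le> M / 2" unfolding M_def
      using sJ half by (intro cSup_least) (auto simp: M_def)
    hence M00: "M = 0" using M0 by simp
    show "\<exists>e>0. \<forall>x'\<in>I. dist x' s < e \<longrightarrow> x' \<in> Z"
    proof (intro exI[of _ h] conjI h0 ballI impI)
      fix x' assume "x' \<in> I" "dist x' s < h"
      hence "x' \<in> J" unfolding J_def by (auto simp: dist_commute)
      hence "norm (g x') \<le> 0" using leM M00 by fastforce
      thus "x' \<in> Z" unfolding Z_def using \<open>x' \<in> I\<close> by simp
    qed
  qed
  have "connected I" using I(1) is_interval_connected by blast
  moreover have "Z \<noteq> {}" unfolding Z_def g_def using I(2) eq0 by auto
  ultimately have "Z = I" using openZ closedZ connected_clopen by blast
  thus ?thesis unfolding Z_def g_def by auto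
qed

primrec pic :: "('a::banach \<Rightarrow> 'a) \<Rightarrow> 'a \<Rightarrow> nat \<Rightarrow> real \<Rightarrow> 'a" where
  "pic f x0 0 = (\<lambda>t. x0)"
| "pic f x0 (Suc k) = (\<lambda>t. x0 + integral {0..t} (\<lambda>s. f (pic f x0 k s)))"

context
  fixes f :: "'a::banach \<Rightarrow> 'a" and L :: real and x0 :: 'a
  assumes lip: "L-lipschitz_on UNIV f"
begin

lemma f_cont: "continuous_on S f"
  using lipschitz_on_continuous_on[OF lip] continuous_on_subset by blast

lemma L_nonneg: "L \<ge> 0" using lip lipschitz_on_nonneg by blast

lemma f_lip: "norm (f a - f b) \<le> L * norm (a - b)"
  using lipschitz_onD[OF lip, of a b] by (simp add: dist_norm)

lemma pic_cont: "continuous_on {0..T} (pic f x0 k)"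
proof (induction k arbitrary: T)
  case 0 then show ?case by simp
next
  case (Suc k)
  have "continuous_on {0..T} (\<lambda>s. f (pic f x0 k s))"
    using continuous_on_compose2[OF f_cont Suc.IH] by blast
  then have "continuous_on {0..T} (\<lambda>t. integral {0..t} (\<lambda>s. f (pic f x0 k s)))"
    by (intro indefinite_integral_continuous_1 integrable_continuous_real)
  then show ?case by (simp add: continuous_intros)
qed

lemma fpic_cont: "continuous_on {0..T} (\<lambda>s. f (pic f x0 k s))"
  using continuous_on_compose2[OF f_cont pic_cont] by blast

lemma power_integral:
  assumes "0 \<le> t"
  shows "((\<lambda>s. c * s ^ n) has_integral (c * t ^ Suc n / real (Suc n))) {0..t}"
proof -
  have "((\<lambda>s. c * s ^ n) has_integral ((\<lambda>s. c * s ^ Suc n / real (Suc n)) t - (\<lambda>s. c * s ^ Suc n / real (Suc n)) 0)) {0..t}"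
  proof (rule fundamental_theorem_of_calculus[OF assms])
    fix x :: real assume "x \<in> {0..t}"
    have "((\<lambda>s. c * s ^ Suc n / real (Suc n)) has_real_derivative c * (real (Suc n) * x ^ n) / real (Suc n)) (at x)"
      by (intro derivative_eq_intros) auto
    then have "((\<lambda>s. c * s ^ Suc n / real (Suc n)) has_real_derivative c * x ^ n) (at x)"
      by simp
    then show "((\<lambda>s. c * s ^ Suc n / real (Suc n)) has_vector_derivative c * x ^ n) (at x within {0..t})"
      by (simp add: has_real_derivative_iff_has_vector_derivative has_vector_derivative_at_within)
  qed
  then show ?thesis by simp
qed

lemma pic_est:
  "0 \<le> t \<Longrightarrow> norm (pic f x0 (Suc k) t - pic f x0 k t) \<le> norm (f x0) * L ^ k * t ^ Suc k / fact (Suc k)"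
proof (induction k arbitrary: t)
  case 0
  then show ?case by simp
next
  case (Suc k)
  define c where "c = L * (norm (f x0) * L ^ k / fact (Suc k))"
  have i1: "(\<lambda>s. f (pic f x0 (Suc k) s)) integrable_on {0..t}"
    by (rule integrable_continuous_real[OF fpic_cont])
  have i2: "(\<lambda>s. f (pic f x0 k s)) integrable_on {0..t}"
    by (rule integrable_continuous_real[OF fpic_cont])
  have "pic f x0 (Suc (Suc k)) t - pic f x0 (Suc k) t =
        integral {0..t} (\<lambda>s. f (pic f x0 (Suc k) s) - f (pic f x0 k s))"
    using integral_diff[OF i1 i2] by simp
  also have "norm \<dots> \<le> integral {0..t} (\<lambda>s. c * s ^ Suc k)"
  proof (rule integral_norm_bound_integral)
    show "(\<lambda>s. f (pic f x0 (Suc k) s) - f (pic f x0 k s)) integrable_on {0..t}"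
      using i1 i2 by (rule integrable_diff)
    show "(\<lambda>s. c * s ^ Suc k) integrable_on {0..t}"
      using power_integral[OF Suc.prems] by blast
    fix s assume s: "s \<in> {0..t}"
    have "norm (f (pic f x0 (Suc k) s) - f (pic f x0 k s)) \<le> L * norm (pic f x0 (Suc k) s - pic f x0 k s)"
      by (rule f_lip)
    also have "\<dots> \<le> L * (norm (f x0) * L ^ k * s ^ Suc k / fact (Suc k))"
      using Suc.IH[of s] s L_nonneg by (intro mult_left_mono) auto
    also have "\<dots> = c * s ^ Suc k" unfolding c_def by simp
    finally show "norm (f (pic f x0 (Suc k) s) - f (pic f x0 k s)) \<le> c * s ^ Suc k" .
  qed
  also have "\<dots> = c * t ^ Suc (Suc k) / real (Suc (Suc k))"
    using power_integral[OF Suc.prems] by blast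
  also have "\<dots> = norm (f x0) * L ^ Suc k * t ^ Suc (Suc k) / fact (Suc (Suc k))"
    unfolding c_def by (simp add: field_simps)
  finally show ?case .
qed

lemma pic_bound:
  assumes "t \<in> {0..T}"
  shows "norm (pic f x0 (Suc k) t - pic f x0 k t) \<le> norm (f x0) * T * ((L * T) ^ k / fact k)"
proof -
  have t0: "0 \<le> t" and tT: "t \<le> T" using assms by auto
  have "norm (pic f x0 (Suc k) t - pic f x0 k t) \<le> norm (f x0) * L ^ k * t ^ Suc k / fact (Suc k)"
    using pic_est[OF t0] .
  also have "\<dots> \<le> norm (f x0) * L ^ k * T ^ Suc k / fact k"
  proof (rule frac_le)
    show "0 \<le> norm (f x0) * L ^ k * T ^ Suc k" using L_nonneg t0 tT by auto
    show "norm (f x0) * L ^ k * t ^ Suc k \<le> norm (f x0) * L ^ k * T ^ Suc k"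
      using L_nonneg t0 tT by (intro mult_left_mono power_mono) auto
    show "0 < (fact k :: real)" by simp
    show "(fact k :: real) \<le> fact (Suc k)" by (rule fact_mono) auto
  qed
  also have "\<dots> = norm (f x0) * T * ((L * T) ^ k / fact k)"
    by (simp add: power_mult_distrib)
  finally show ?thesis .
qed

definition picy :: "real \<Rightarrow> 'a" where
  "picy t = x0 + (\<Sum>i. pic f x0 (Suc i) t - pic f x0 i t)"

lemma pic_unif: "uniform_limit {0..T} (pic f x0) picy sequentially"
proof -
  have s: "summable (\<lambda>k. norm (f x0) * T * ((L * T) ^ k / fact k))"
    using summable_exp[of "L * T"] by (intro summable_mult) (simp add: field_simps)
  have W: "uniform_limit {0..T} (\<lambda>n t. \<Sum>i<n. pic f x0 (Suc i) t - pic f x0 i t)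
       (\<lambda>t. \<Sum>i. pic f x0 (Suc i) t - pic f x0 i t) sequentially"
    by (rule Weierstrass_m_test[OF pic_bound s])
  show ?thesis
  proof (rule uniform_limitI)
    fix e :: real assume "e > 0"
    from uniform_limitD[OF W this]
    show "\<forall>\<^sub>F n in sequentially. \<forall>t\<in>{0..T}. dist (pic f x0 n t) (picy t) < e"
    proof (rule eventually_mono)
      fix n assume H: "\<forall>t\<in>{0..T}. dist (\<Sum>i<n. pic f x0 (Suc i) t - pic f x0 i t) (\<Sum>i. pic f x0 (Suc i) t - pic f x0 i t) < e"
      show "\<forall>t\<in>{0..T}. dist (pic f x0 n t) (picy t) < e"
      proof
        fix t assume "t \<in> {0..T}"
        have "(\<Sum>i<n. pic f x0 (Suc i) t - pic f x0 i t) = pic f x0 n t - x0"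
          using sum_lessThan_telescope[of "\<lambda>i. pic f x0 i t" n] by simp
        then show "dist (pic f x0 n t) (picy t) < e"
          using H \<open>t \<in> {0..T}\<close> unfolding picy_def dist_norm
          by (metis (no_types, lifting) add_diff_cancel_left' diff_add_cancel diff_diff_eq2)
      qed
    qed
  qed
qed

lemma picy_cont: "continuous_on {0..T} picy"
  by (rule uniform_limit_theorem[OF _ pic_unif]) (auto intro: always_eventually pic_cont)

lemma picy_cont_f: "continuous_on {0..T} (\<lambda>s. f (picy s))"
  using continuous_on_compose2[OF f_cont picy_cont] by blast

lemma picy_eq:
  assumes t: "0 \<le> t"
  shows "picy t = x0 + integral {0..t} (\<lambda>s. f (picy s))"
proof -
  have U: "uniform_limit {0..t} (\<lambda>n s. f (pic f x0 n s)) (\<lambda>s. f (picy s)) sequentially"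
  proof (rule uniform_limitI)
    fix e :: real assume e: "e > 0"
    have "e / (L + 1) > 0" using e L_nonneg by simp
    from uniform_limitD[OF pic_unif this]
    show "\<forall>\<^sub>F n in sequentially. \<forall>s\<in>{0..t}. dist (f (pic f x0 n s)) (f (picy s)) < e"
    proof (rule eventually_mono)
      fix n assume H: "\<forall>s\<in>{0..t}. dist (pic f x0 n s) (picy s) < e / (L + 1)"
      show "\<forall>s\<in>{0..t}. dist (f (pic f x0 n s)) (f (picy s)) < e"
      proof
        fix s assume s: "s \<in> {0..t}"
        have "dist (f (pic f x0 n s)) (f (picy s)) \<le> L * dist (pic f x0 n s) (picy s)"
          using f_lip by (simp add: dist_norm)
        also have "\<dots> \<le> (L + 1) * dist (pic f x0 n s) (picy s)"
          by (intro mult_right_mono) auto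
        also have "\<dots> < (L + 1) * (e / (L + 1))"
          using H s L_nonneg by (intro mult_strict_left_mono) auto
        also have "\<dots> = e" using L_nonneg by simp
        finally show "dist (f (pic f x0 n s)) (f (picy s)) < e" .
      qed
    qed
  qed
  obtain I J where IJ: "\<And>n. ((\<lambda>s. f (pic f x0 n s)) has_integral I n) {0..t}"
    "((\<lambda>s. f (picy s)) has_integral J) {0..t}" "(I \<longlonglongrightarrow> J)"
    using uniform_limit_integral[OF U fpic_cont] by auto
  have "(\<lambda>n. pic f x0 (Suc n) t) \<longlonglongrightarrow> x0 + J"
  proof -
    have "\<And>n. integral {0..t} (\<lambda>s. f (pic f x0 n s)) = I n" using IJ(1) integral_unique by blast
    then show ?thesis using IJ(3) by (simp add: tendsto_add)
  qed
  moreover have "(\<lambda>n. pic f x0 (Suc n) t) \<longlonglongrightarrow> picy t"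
  proof -
    have "(\<lambda>n. pic f x0 n t) \<longlonglongrightarrow> picy t"
      using tendsto_uniform_limitI[OF pic_unif, of t t] t by auto
    then show ?thesis by (rule LIMSEQ_Suc)
  qed
  ultimately have "picy t = x0 + J" using LIMSEQ_unique by blast
  then show ?thesis using IJ(2) by (simp add: integral_unique)
qed

lemma picy_deriv:
  assumes t: "0 \<le> t"
  shows "(picy has_vector_derivative f (picy t)) (at t within {0..})"
proof -
  define T where "T = t + 1"
  have tT: "t \<in> {0..T}" using t unfolding T_def by auto
  have "((\<lambda>u. x0 + integral {0..u} (\<lambda>s. f (picy s))) has_vector_derivative f (picy t)) (at t within {0..T})"
    using has_vector_derivative_add[OF has_vector_derivative_const
        integral_has_vector_derivative[OF picy_cont_f tT]] by simp
  then have "(picy has_vector_derivative f (picy t)) (at t within {0..T})"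
    by (rule has_vector_derivative_transform[OF tT, rotated]) (simp add: picy_eq)
  moreover have "at t within {0..T} = at t within {0..}"
    by (rule at_within_nhd[of _ "{..<T}"]) (auto simp: T_def)
  ultimately show ?thesis by simp
qed

lemma picy_0: "picy 0 = x0"
proof -
  have "picy 0 = x0 + integral {0..0} (\<lambda>s. f (picy s))" by (rule picy_eq) simp
  then show ?thesis by simp
qed

end

lemma ode_forward_exists:
  fixes f :: "'a::banach \<Rightarrow> 'a"
  assumes "L-lipschitz_on UNIV f"
  shows "\<exists>y. y 0 = x0 \<and> (\<forall>t\<ge>0. (y has_vector_derivative f (y t)) (at t within {0..}))"
  using picy_0[OF assms] picy_deriv[OF assms] by blast

lemma ode_global_lip:
  fixes f :: "'a::banach \<Rightarrow> 'a"
  assumes lip: "L-lipschitz_on UNIV f"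
  shows "\<exists>\<gamma>. \<gamma> 0 = x0 \<and> (\<forall>t. (\<gamma> has_vector_derivative f (\<gamma> t)) (at t))"
proof -
  obtain y where y0: "y 0 = x0" and y: "\<And>t. t \<ge> 0 \<Longrightarrow> (y has_vector_derivative f (y t)) (at t within {0..})"
    using ode_forward_exists[OF lip] by blast
  have lip2: "L-lipschitz_on UNIV (\<lambda>x. - f x)" using lip by simp
  obtain z where z0: "z 0 = x0" and z: "\<And>t. t \<ge> 0 \<Longrightarrow> (z has_vector_derivative - f (z t)) (at t within {0..})"
    using ode_forward_exists[OF lip2] by blast
  define \<gamma> where "\<gamma> = (\<lambda>t. if t \<in> {0::real..} then y t else z (- t))"
  have zb: "((\<lambda>s. z (- s)) has_vector_derivative f (z (- t))) (at t within {..0})" if "t \<le> 0" for t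
  proof -
    have 1: "((\<lambda>s. - s) has_vector_derivative (-1)) (at t within {..0})"
      by (auto intro!: derivative_eq_intros)
    have im: "(\<lambda>s::real. - s) ` {..0} = {0..}"
      by (auto simp: image_iff intro!: exI[of _ "- _"])
    have 2: "(z has_vector_derivative - f (z (- t))) (at (- t) within (\<lambda>s. - s) ` {..0})"
      unfolding im using z[of "- t"] that by simp
    show ?thesis using vector_diff_chain_within[OF 1 2] by (simp add: o_def)
  qed
  have cl: "closure {0::real..} \<inter> closure {..0} = {0}" by auto
  have D: "(\<gamma> has_vector_derivative (if t \<in> {0..} then f (y t) else f (z (- t)))) (at t within UNIV)" for t
    unfolding \<gamma>_def
  proof (rule has_vector_derivative_If_within_closures[where T = "{..0}"])
    show "t \<in> {0..} \<union> {..0}" by auto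
    show "UNIV = {0::real..} \<union> {..0}" by auto
    show "(y has_vector_derivative f (y t)) (at t within {0..} \<union> closure {0..} \<inter> closure {..0})"
      if "t \<in> {0..} \<union> closure {0..} \<inter> closure {..0}"
      using that y by (simp add: cl insert_absorb)
    show "((\<lambda>s. z (- s)) has_vector_derivative f (z (- t))) (at t within {..0} \<union> closure {0..} \<inter> closure {..0})"
      if "t \<in> {..0} \<union> closure {0..} \<inter> closure {..0}"
      using that zb by (simp add: cl insert_absorb)
    show "y t = z (- t)" if "t \<in> closure {0..}" "t \<in> closure {..0}" using that y0 z0 by simp
    show "f (y t) = f (z (- t))" if "t \<in> closure {0..}" "t \<in> closure {..0}" using that y0 z0 by simp
  qed
  show ?thesis
  proof (intro exI[of _ \<gamma>] conjI allI)
    show "\<gamma> 0 = x0" unfolding \<gamma>_def using y0 by simp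
    fix t
    show "(\<gamma> has_vector_derivative f (\<gamma> t)) (at t)"
      using D[of t] unfolding \<gamma>_def by (simp split: if_splits)
  qed
qed

lemma continuous_induction:
  fixes g :: "real \<Rightarrow> real"
  assumes cont: "continuous_on {0..T} g" and g0: "g 0 \<le> \<rho>" and \<rho>R: "\<rho> < R"
    and step: "\<And>t. t \<in> {0..T} \<Longrightarrow> (\<forall>s\<in>{0..t}. g s \<le> R) \<Longrightarrow> g t \<le> \<rho>"
  shows "\<forall>t\<in>{0..T}. g t \<le> \<rho>"
proof (rule ccontr)
  define m where "m = (\<rho> + R) / 2"
  have m: "\<rho> < m" "m < R" unfolding m_def using \<rho>R by auto
  define C where "C = {0..T} \<inter> g -` {m..}"
  assume "\<not> (\<forall>t\<in>{0..T}. g t \<le> \<rho>)"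
  then obtain t where t: "t \<in> {0..T}" "g t > \<rho>" by auto
  then have "t \<in> {0..T}" "g t \<le> \<rho>" if "\<forall>s\<in>{0..t}. g s \<le> R"
    using step that by auto
  then have "\<exists>s\<in>{0..t}. g s > R" using t by force
  then obtain s where s': "s \<in> {0..t}" "g s > R" by blast
  then have s: "s \<in> {0..T}" "g s > R" using t by auto
  have "closed C" unfolding C_def by (rule continuous_closed_preimage[OF cont]) auto
  moreover have "bounded C" unfolding C_def by (rule bounded_subset[of "{0..T}"]) auto
  ultimately have "compact C" using compact_eq_bounded_closed by blast
  moreover have "C \<noteq> {}" using s m unfolding C_def by force
  ultimately obtain t1 where t1: "t1 \<in> C" "\<And>u. u \<in> C \<Longrightarrow> t1 \<le> u"
    using compact_attains_inf by metis
  have t1T: "t1 \<in> {0..T}" and gt1: "g t1 \<ge> m" using t1 unfolding C_def by auto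
  have t1pos: "t1 > 0"
  proof (rule ccontr)
    assume "\<not> t1 > 0" then have "t1 = 0" using t1T by auto
    then show False using gt1 g0 m by auto
  qed
  have lt: "g u < m" if "u \<in> {0..<t1}" for u
  proof (rule ccontr)
    assume "\<not> g u < m"
    then have "u \<in> C" using that t1T unfolding C_def by auto
    then show False using t1(2)[of u] that by auto
  qed
  have "g ` closure {0..<t1} \<subseteq> {..m}"
  proof (rule image_closure_subset)
    show "continuous_on (closure {0..<t1}) g"
      using t1pos t1T by (auto intro: continuous_on_subset[OF cont])
    show "g ` {0..<t1} \<subseteq> {..m}" using lt by (auto simp: less_imp_le)
  qed auto
  then have "\<forall>u\<in>{0..t1}. g u \<le> R" using t1pos m by auto
  then have "g t1 \<le> \<rho>" using step t1T by blast
  then show False using gt1 m by auto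
qed

lemma ode_global_apriori:
  fixes f :: "'a::euclidean_space \<Rightarrow> 'a"
  assumes lip: "\<And>c r. \<exists>L. L-lipschitz_on (cball c r) f"
    and apriori: "\<And>T. T \<ge> 0 \<Longrightarrow> \<exists>\<rho>. \<forall>a b \<gamma>. -T \<le> a \<longrightarrow> a \<le> 0 \<longrightarrow> 0 \<le> b \<longrightarrow> b \<le> T \<longrightarrow> \<gamma> 0 = x0 \<longrightarrow>
        (\<forall>t\<in>{a..b}. (\<gamma> has_vector_derivative f (\<gamma> t)) (at t within {a..b})) \<longrightarrow>
        (\<forall>t\<in>{a..b}. dist (\<gamma> t) x0 \<le> \<rho>)"
  shows "\<exists>\<gamma>. \<gamma> 0 = x0 \<and> (\<forall>t. (\<gamma> has_vector_derivative f (\<gamma> t)) (at t))"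
proof -
  have loclip: "\<And>x. \<exists>r>0. \<exists>L. L-lipschitz_on (cball x r) f"
    using lip zero_less_one by blast
  have "\<forall>n::nat. \<exists>\<rho>. \<forall>a b \<gamma>. - real n \<le> a \<longrightarrow> a \<le> 0 \<longrightarrow> 0 \<le> b \<longrightarrow> b \<le> real n \<longrightarrow> \<gamma> 0 = x0 \<longrightarrow>
        (\<forall>t\<in>{a..b}. (\<gamma> has_vector_derivative f (\<gamma> t)) (at t within {a..b})) \<longrightarrow>
        (\<forall>t\<in>{a..b}. dist (\<gamma> t) x0 \<le> \<rho>)"
    using apriori by simp
  then obtain \<rho>' where \<rho>': "\<And>n a b \<gamma>. - real n \<le> a \<Longrightarrow> a \<le> 0 \<Longrightarrow> 0 \<le> b \<Longrightarrow> b \<le> real n \<Longrightarrow> \<gamma> 0 = x0 \<Longrightarrow>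
        (\<forall>t\<in>{a..b}. (\<gamma> has_vector_derivative f (\<gamma> t)) (at t within {a..b})) \<Longrightarrow>
        (\<forall>t\<in>{a..b}. dist (\<gamma> t) x0 \<le> \<rho>' n)"
    by metis
  define \<rho> where "\<rho> n = \<bar>\<rho>' n\<bar>" for n
  define K where "K n = cball x0 (\<rho> n + 1)" for n
  have Kne: "K n \<noteq> {}" "closed (K n)" "convex (K n)" for n
    unfolding K_def \<rho>_def by auto
  define g where "g n = f \<circ> closest_point (K n)" for n
  have "\<exists>\<gamma>. \<gamma> 0 = x0 \<and> (\<forall>t. (\<gamma> has_vector_derivative g n (\<gamma> t)) (at t))" for n
  proof -
    obtain L where L: "L-lipschitz_on (K n) f" using lip unfolding K_def by blast
    have cp: "1-lipschitz_on UNIV (closest_point (K n))"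
      using closest_point_lipschitz[OF Kne(3,2,1)] by (auto intro: lipschitz_onI)
    have "(L * 1)-lipschitz_on UNIV (f \<circ> closest_point (K n))"
    proof (rule lipschitz_on_compose[OF cp])
      show "L-lipschitz_on (closest_point (K n) ` UNIV) f"
        using L closest_point_in_set[OF Kne(2,1)] lipschitz_on_subset by blast
    qed
    then show ?thesis unfolding g_def using ode_global_lip by blast
  qed
  then obtain \<gamma>s where \<gamma>s0: "\<And>n. \<gamma>s n 0 = x0"
    and \<gamma>sd: "\<And>n t. (\<gamma>s n has_vector_derivative g n (\<gamma>s n t)) (at t)" by metis
  have \<gamma>scont: "continuous_on S (\<gamma>s n)" for n S
    using \<gamma>sd has_vector_derivative_continuous continuous_at_imp_continuous_on by blast
  have gK: "g n x = f x" if "x \<in> K n" for n x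
    unfolding g_def using closest_point_self[OF that] by simp
  have stay: "\<forall>t\<in>{- real n..real n}. dist (\<gamma>s n t) x0 \<le> \<rho> n" for n
  proof -
    have fw: "\<forall>t\<in>{0..real n}. dist (\<gamma>s n t) x0 \<le> \<rho> n"
    proof (rule continuous_induction[where R = "\<rho> n + 1"])
      show "continuous_on {0..real n} (\<lambda>t. dist (\<gamma>s n t) x0)"
        by (intro continuous_intros \<gamma>scont)
      show "dist (\<gamma>s n 0) x0 \<le> \<rho> n" using \<gamma>s0 unfolding \<rho>_def by simp
      fix t assume t: "t \<in> {0..real n}" and H: "\<forall>s\<in>{0..t}. dist (\<gamma>s n s) x0 \<le> \<rho> n + 1"
      have "\<forall>s\<in>{0..t}. (\<gamma>s n has_vector_derivative f (\<gamma>s n s)) (at s within {0..t})"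
      proof
        fix s assume "s \<in> {0..t}"
        then have "\<gamma>s n s \<in> K n" using H unfolding K_def by (auto simp: dist_commute)
        then show "(\<gamma>s n has_vector_derivative f (\<gamma>s n s)) (at s within {0..t})"
          using \<gamma>sd[of n s] gK has_vector_derivative_at_within by metis
      qed
      then have "\<forall>s\<in>{0..t}. dist (\<gamma>s n s) x0 \<le> \<rho>' n"
        using \<rho>'[of n 0 t "\<gamma>s n"] t \<gamma>s0 by auto
      then show "dist (\<gamma>s n t) x0 \<le> \<rho> n" using t unfolding \<rho>_def by force
    qed auto
    have bw: "\<forall>t\<in>{0..real n}. dist (\<gamma>s n (- t)) x0 \<le> \<rho> n"
    proof (rule continuous_induction[where R = "\<rho> n + 1"])
      show "continuous_on {0..real n} (\<lambda>t. dist (\<gamma>s n (- t)) x0)"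
        by (intro continuous_intros continuous_on_compose2[OF \<gamma>scont[of UNIV]]) auto
      show "dist (\<gamma>s n (- 0)) x0 \<le> \<rho> n" using \<gamma>s0 unfolding \<rho>_def by simp
      fix t assume t: "t \<in> {0..real n}" and H: "\<forall>s\<in>{0..t}. dist (\<gamma>s n (- s)) x0 \<le> \<rho> n + 1"
      have "\<forall>s\<in>{-t..0}. (\<gamma>s n has_vector_derivative f (\<gamma>s n s)) (at s within {-t..0})"
      proof
        fix s assume "s \<in> {-t..0}"
        then have "- s \<in> {0..t}" by auto
        then have "\<gamma>s n s \<in> K n" using H[rule_format, of "- s"] unfolding K_def by (auto simp: dist_commute)
        then show "(\<gamma>s n has_vector_derivative f (\<gamma>s n s)) (at s within {-t..0})"
          using \<gamma>sd[of n s] gK has_vector_derivative_at_within by metis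
      qed
      then have "\<forall>s\<in>{-t..0}. dist (\<gamma>s n s) x0 \<le> \<rho>' n"
        using \<rho>'[of n "- t" 0 "\<gamma>s n"] t \<gamma>s0 by auto
      then show "dist (\<gamma>s n (- t)) x0 \<le> \<rho> n" using t unfolding \<rho>_def by force
    qed auto
    show ?thesis
    proof
      fix t assume t: "t \<in> {- real n..real n}"
      show "dist (\<gamma>s n t) x0 \<le> \<rho> n"
      proof (cases "t \<ge> 0")
        case True then show ?thesis using fw t by auto
      next
        case False then show ?thesis using bw[rule_format, of "- t"] t by auto
      qed
    qed
  qed
  have solf: "(\<gamma>s n has_vector_derivative f (\<gamma>s n t)) (at t)" if "t \<in> {- real n..real n}" for n t
  proof -
    have "dist (\<gamma>s n t) x0 \<le> \<rho> n" using stay[of n] that by blast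
    then have "\<gamma>s n t \<in> K n" unfolding K_def by (auto simp: dist_commute)
    then show ?thesis using \<gamma>sd[of n t] gK by metis
  qed
  have agree: "\<gamma>s m t = \<gamma>s n t" if "m \<le> n" "t \<in> {- real m..real m}" for m n t
  proof -
    have "\<forall>t\<in>{- real m..real m}. \<gamma>s m t = \<gamma>s n t"
    proof (rule ode_unique_interval[OF loclip])
      show "is_interval {- real m..real m}" by (simp add: is_interval_cc)
      show "0 \<in> {- real m..real m}" by simp
      show "\<gamma>s m 0 = \<gamma>s n 0" using \<gamma>s0 by simp
      fix s assume s: "s \<in> {- real m..real m}"
      show "(\<gamma>s m has_vector_derivative f (\<gamma>s m s)) (at s within {- real m..real m})"
        using solf[OF s] has_vector_derivative_at_within by blast
      have "s \<in> {- real n..real n}" using s that by auto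
      then show "(\<gamma>s n has_vector_derivative f (\<gamma>s n s)) (at s within {- real m..real m})"
        using solf has_vector_derivative_at_within by blast
    qed
    then show ?thesis using that by blast
  qed
  define N where "N t = nat \<lceil>\<bar>t\<bar>\<rceil> + 1" for t :: real
  have N: "\<bar>t\<bar> \<le> real (N t)" for t unfolding N_def by linarith
  define \<gamma> where "\<gamma> t = \<gamma>s (N t) t" for t
  show ?thesis
  proof (intro exI[of _ \<gamma>] conjI allI)
    show "\<gamma> 0 = x0" unfolding \<gamma>_def using \<gamma>s0 by simp
    fix t :: real
    define n where "n = nat \<lceil>\<bar>t\<bar>\<rceil> + 2"
    have tn: "t \<in> {- real n..real n}" unfolding n_def by (auto; linarith)
    have eq: "\<gamma>s n s = \<gamma> s" if "s \<in> ball t 1" for s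
    proof -
      have "\<bar>s\<bar> < \<bar>t\<bar> + 1" using that by (auto simp: dist_real_def)
      then have "\<lceil>\<bar>s\<bar>\<rceil> \<le> \<lceil>\<bar>t\<bar>\<rceil> + 1" by linarith
      then have "N s \<le> n" unfolding N_def n_def by linarith
      moreover have "s \<in> {- real (N s)..real (N s)}" using N[of s] by auto
      ultimately show ?thesis unfolding \<gamma>_def using agree by metis
    qed
    have "(\<gamma>s n has_vector_derivative f (\<gamma>s n t)) (at t)" by (rule solf[OF tn])
    then have "(\<gamma> has_vector_derivative f (\<gamma>s n t)) (at t)"
      by (rule has_vector_derivative_transform_within_open[of _ _ _ "ball t 1"]) (auto simp: eq)
    then show "(\<gamma> has_vector_derivative f (\<gamma> t)) (at t)" using eq[of t] by simp
  qed
qed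

lemma c_inf_diff: "c_inf_on S f \<Longrightarrow> x \<in> S \<Longrightarrow> f differentiable (at x)"
  by (erule c_inf_on.cases) auto

lemma c_inf_deriv: "c_inf_on S f \<Longrightarrow> b \<in> Basis \<Longrightarrow> c_inf_on S (\<lambda>x. frechet_derivative f (at x) b)"
  by (erule c_inf_on.cases) auto

lemma c_inf_const: "c_inf_on S (\<lambda>x. c)"
proof (rule c_inf_on.coinduct[where X = "\<lambda>f. \<exists>c. f = (\<lambda>x. c)"])
  show "\<exists>c'. (\<lambda>x. c) = (\<lambda>x. c')" by blast
next
  fix f :: "'a \<Rightarrow> real" assume "\<exists>c. f = (\<lambda>x. c)"
  then obtain c where "f = (\<lambda>x. c)" by blast
  then show "\<exists>g. f = g \<and> (\<forall>x\<in>S. g differentiable at x) \<and>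
      (\<forall>b\<in>Basis. (\<exists>c. (\<lambda>x. frechet_derivative g (at x) b) = (\<lambda>x. c)) \<or>
                  c_inf_on S (\<lambda>x. frechet_derivative g (at x) b))"
    by (auto simp: frechet_derivative_const)
qed

lemma frechet_derivative_eqI: "(f has_derivative f') (at x) \<Longrightarrow> frechet_derivative f (at x) = f'"
  using frechet_derivative_at by metis

lemma c_inf_linear:
  assumes "bounded_linear l"
  shows "c_inf_on S l"
proof (rule c_inf_on.intros)
  show "\<forall>x\<in>S. l differentiable at x"
    using assms bounded_linear_imp_differentiable by blast
  have "frechet_derivative l (at x) = l" for x
    by (rule frechet_derivative_eqI) (rule bounded_linear.has_derivative[OF assms has_derivative_ident])
  then show "\<forall>b\<in>Basis. c_inf_on S (\<lambda>x. frechet_derivative l (at x) b)"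
    by (simp add: c_inf_const)
qed

lemma c_inf_quad:
  assumes "\<And>x. f differentiable (at x)"
    and "\<And>b. b \<in> Basis \<Longrightarrow> bounded_linear (\<lambda>x. frechet_derivative f (at x) b)"
  shows "c_inf_on S f"
  using assms by (intro c_inf_on.intros) (auto intro: c_inf_linear)

lemma c_inf_add:
  assumes "c_inf_on UNIV f" "c_inf_on UNIV g"
  shows "c_inf_on UNIV (\<lambda>x. f x + g x)"
proof (rule c_inf_on.coinduct[where X = "\<lambda>h. \<exists>f g. c_inf_on UNIV f \<and> c_inf_on UNIV g \<and> h = (\<lambda>x. f x + g x)"])
  show "\<exists>f' g'. c_inf_on UNIV f' \<and> c_inf_on UNIV g' \<and> (\<lambda>x. f x + g x) = (\<lambda>x. f' x + g' x)"
    using assms by blast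
next
  fix h :: "'a \<Rightarrow> real"
  assume "\<exists>f g. c_inf_on UNIV f \<and> c_inf_on UNIV g \<and> h = (\<lambda>x. f x + g x)"
  then obtain f g where fg: "c_inf_on UNIV f" "c_inf_on UNIV g" and h: "h = (\<lambda>x. f x + g x)" by blast
  have df: "f differentiable at x" and dg: "g differentiable at x" for x
    using c_inf_diff fg by auto
  have D: "frechet_derivative h (at x) = (\<lambda>v. frechet_derivative f (at x) v + frechet_derivative g (at x) v)" for x
  proof (rule frechet_derivative_eqI)
    have "(f has_derivative frechet_derivative f (at x)) (at x)" using df frechet_derivative_works by blast
    moreover have "(g has_derivative frechet_derivative g (at x)) (at x)" using dg frechet_derivative_works by blast
    ultimately show "(h has_derivative (\<lambda>v. frechet_derivative f (at x) v + frechet_derivative g (at x) v)) (at x)"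
      unfolding h by (rule has_derivative_add)
  qed
  show "\<exists>h'. h = h' \<and> (\<forall>x\<in>UNIV. h' differentiable at x) \<and>
      (\<forall>b\<in>Basis. (\<exists>f g. c_inf_on UNIV f \<and> c_inf_on UNIV g \<and> (\<lambda>x. frechet_derivative h' (at x) b) = (\<lambda>x. f x + g x)) \<or>
                  c_inf_on UNIV (\<lambda>x. frechet_derivative h' (at x) b))"
  proof (intro exI[of _ h] conjI ballI)
    show "h = h" ..
    show "h differentiable at x" for x unfolding h using df dg by (intro differentiable_add) auto
    fix b :: 'a assume b: "b \<in> Basis"
    have "(\<lambda>x. frechet_derivative h (at x) b) = (\<lambda>x. frechet_derivative f (at x) b + frechet_derivative g (at x) b)"
      using D by simp
    then show "(\<exists>f' g'. c_inf_on UNIV f' \<and> c_inf_on UNIV g' \<and> (\<lambda>x. frechet_derivative h (at x) b) = (\<lambda>x. f' x + g' x)) \<or>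
                  c_inf_on UNIV (\<lambda>x. frechet_derivative h (at x) b)"
      using c_inf_deriv[OF fg(1) b] c_inf_deriv[OF fg(2) b] by blast
  qed
qed

lemma c_inf_fst:
  fixes g :: "'a::euclidean_space \<Rightarrow> real"
  assumes "c_inf_on UNIV g"
  shows "c_inf_on UNIV (\<lambda>x::'a \<times> 'b::euclidean_space. g (fst x))"
proof (rule c_inf_on.coinduct[where X = "\<lambda>h. \<exists>g. c_inf_on UNIV g \<and> h = (\<lambda>x::'a \<times> 'b. g (fst x))"])
  show "\<exists>g'. c_inf_on UNIV g' \<and> (\<lambda>x::'a \<times> 'b. g (fst x)) = (\<lambda>x. g' (fst x))" using assms by blast
next
  fix h :: "'a \<times> 'b \<Rightarrow> real"
  assume "\<exists>g. c_inf_on UNIV g \<and> h = (\<lambda>x. g (fst x))"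
  then obtain g where g: "c_inf_on UNIV g" and h: "h = (\<lambda>x. g (fst x))" by blast
  have dg: "g differentiable at x" for x using c_inf_diff g by auto
  have Hd: "(h has_derivative (\<lambda>v. frechet_derivative g (at (fst x)) (fst v))) (at x)" for x
  proof -
    have "((\<lambda>x. g (fst x)) has_derivative (\<lambda>v. frechet_derivative g (at (fst x)) (fst v))) (at x)"
      using has_derivative_compose[OF has_derivative_fst[OF has_derivative_ident] dg[of "fst x", unfolded frechet_derivative_works]]
      by simp
    then show ?thesis unfolding h .
  qed
  have D: "frechet_derivative h (at x) = (\<lambda>v. frechet_derivative g (at (fst x)) (fst v))" for x
    using Hd frechet_derivative_eqI by blast
  have lin: "linear (frechet_derivative g (at y))" for y
    using dg[of y] frechet_derivative_works has_derivative_linear by blast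
  show "\<exists>h'. h = h' \<and> (\<forall>x\<in>UNIV. h' differentiable at x) \<and>
      (\<forall>b\<in>Basis. (\<exists>g. c_inf_on UNIV g \<and> (\<lambda>x. frechet_derivative h' (at x) b) = (\<lambda>x. g (fst x))) \<or>
                  c_inf_on UNIV (\<lambda>x. frechet_derivative h' (at x) b))"
  proof (intro exI[of _ h] conjI ballI refl)
    show "h differentiable at x" for x using Hd differentiable_def by blast
    fix b :: "'a \<times> 'b" assume b: "b \<in> Basis"
    then consider "fst b \<in> Basis" "snd b = 0" | "fst b = 0" "snd b \<in> Basis"
      using in_Basis_prod_iff by blast
    then show "(\<exists>g. c_inf_on UNIV g \<and> (\<lambda>x. frechet_derivative h (at x) b) = (\<lambda>x. g (fst x))) \<or>
                  c_inf_on UNIV (\<lambda>x. frechet_derivative h (at x) b)"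
    proof cases
      case 1
      then show ?thesis using c_inf_deriv[OF g 1(1)] D by auto
    next
      case 2
      have "frechet_derivative h (at x) b = 0" for x
      proof -
        have "frechet_derivative h (at x) b = frechet_derivative g (at (fst x)) (fst b)" by (simp add: D)
        also have "\<dots> = 0" using 2 linear_0[OF lin] by simp
        finally show ?thesis .
      qed
      then have "(\<lambda>x. frechet_derivative h (at x) b) = (\<lambda>x. 0)" by auto
      then show ?thesis using c_inf_const by auto
    qed
  qed
qed

lemma c_inf_lipschitz:
  fixes g :: "'a::euclidean_space \<Rightarrow> real"
  assumes g: "c_inf_on UNIV g"
  shows "\<exists>L. L-lipschitz_on (cball c r) g"
proof -
  have dg: "g differentiable at x" for x using c_inf_diff[OF g] by auto
  have lin: "linear (frechet_derivative g (at x))" for x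
    using dg[of x] frechet_derivative_works has_derivative_linear by blast
  have repr: "frechet_derivative g (at x) h = (\<Sum>b\<in>Basis. (h \<bullet> b) * frechet_derivative g (at x) b)" for x h
  proof -
    have "frechet_derivative g (at x) h = frechet_derivative g (at x) (\<Sum>b\<in>Basis. (h \<bullet> b) *\<^sub>R b)"
      by (simp add: euclidean_representation)
    also have "\<dots> = (\<Sum>b\<in>Basis. frechet_derivative g (at x) ((h \<bullet> b) *\<^sub>R b))"
      by (rule linear_sum[OF lin])
    also have "\<dots> = (\<Sum>b\<in>Basis. (h \<bullet> b) * frechet_derivative g (at x) b)"
      by (rule sum.cong[OF refl]) (metis linear_scale[OF lin] real_scaleR_def)
    finally show ?thesis .
  qed
  have "\<forall>b\<in>Basis. \<exists>B. \<forall>x\<in>cball c r. \<bar>frechet_derivative g (at x) b\<bar> \<le> B"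
  proof
    fix b :: 'a assume b: "b \<in> Basis"
    have ci: "c_inf_on UNIV (\<lambda>x. frechet_derivative g (at x) b)" by (rule c_inf_deriv[OF g b])
    have "continuous_on (cball c r) (\<lambda>x. frechet_derivative g (at x) b)"
      using c_inf_diff[OF ci] by (intro differentiable_imp_continuous_on) (auto simp: differentiable_on_def intro: differentiable_at_withinI)
    then have "bounded ((\<lambda>x. frechet_derivative g (at x) b) ` cball c r)"
      by (intro compact_imp_bounded compact_continuous_image) auto
    then show "\<exists>B. \<forall>x\<in>cball c r. \<bar>frechet_derivative g (at x) b\<bar> \<le> B"
      unfolding bounded_iff by auto
  qed
  then obtain B where B': "\<forall>b\<in>Basis. \<forall>x\<in>cball c r. \<bar>frechet_derivative g (at x) b\<bar> \<le> B b"
    by (auto dest!: bchoice)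
  then have B: "\<And>b x. b \<in> Basis \<Longrightarrow> x \<in> cball c r \<Longrightarrow> \<bar>frechet_derivative g (at x) b\<bar> \<le> B b"
    by blast
  define L where "L = (\<Sum>b\<in>Basis. \<bar>B b\<bar>)"
  have L0: "L \<ge> 0" unfolding L_def by (auto intro: sum_nonneg)
  have on: "onorm (frechet_derivative g (at x)) \<le> L" if x: "x \<in> cball c r" for x
  proof (rule onorm_le)
    fix h
    have "norm (frechet_derivative g (at x) h) = \<bar>\<Sum>b\<in>Basis. (h \<bullet> b) * frechet_derivative g (at x) b\<bar>"
      by (simp only: real_norm_def repr[of x h])
    also have "\<dots> \<le> (\<Sum>b\<in>Basis. \<bar>(h \<bullet> b) * frechet_derivative g (at x) b\<bar>)" by (rule sum_abs)
    also have "\<dots> \<le> (\<Sum>b\<in>Basis. norm h * \<bar>B b\<bar>)"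
    proof (rule sum_mono)
      fix b :: 'a assume b: "b \<in> Basis"
      have "\<bar>(h \<bullet> b) * frechet_derivative g (at x) b\<bar> = \<bar>h \<bullet> b\<bar> * \<bar>frechet_derivative g (at x) b\<bar>"
        by (simp add: abs_mult)
      also have "\<dots> \<le> norm h * \<bar>B b\<bar>"
        using Basis_le_norm[OF b, of h] B[OF b x] by (intro mult_mono) auto
      finally show "\<bar>(h \<bullet> b) * frechet_derivative g (at x) b\<bar> \<le> norm h * \<bar>B b\<bar>" .
    qed
    also have "\<dots> = L * norm h" unfolding L_def by (simp add: sum_distrib_left mult.commute)
    finally show "norm (frechet_derivative g (at x) h) \<le> L * norm h" .
  qed
  have "L-lipschitz_on (cball c r) g"
  proof (rule lipschitz_onI[OF _ L0])
    fix x y assume "x \<in> cball c r" "y \<in> cball c r"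
    have "norm (g x - g y) \<le> L * norm (x - y)"
    proof (rule differentiable_bound[OF convex_cball _ on \<open>x \<in> _\<close> \<open>y \<in> _\<close>])
      fix z assume "z \<in> cball c r"
      show "(g has_derivative frechet_derivative g (at z)) (at z within cball c r)"
        using dg[of z] frechet_derivative_works has_derivative_at_withinI by blast
    qed auto
    then show "dist (g x) (g y) \<le> L * dist x y" by (simp add: dist_norm)
  qed
  then show ?thesis by blast
qed

lemma grad_repr:
  fixes W :: "real^'n \<Rightarrow> real"
  assumes "W differentiable at q"
  shows "frechet_derivative W (at q) h = grad W q \<bullet> h"
proof -
  have lin: "linear (frechet_derivative W (at q))"
    using assms frechet_derivative_works has_derivative_linear by blast
  have "frechet_derivative W (at q) h = frechet_derivative W (at q) (\<Sum>i\<in>UNIV. (h $ i) *\<^sub>R axis i 1)"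
    using basis_expansion[of h] by (simp add: scalar_mult_eq_scaleR)
  also have "\<dots> = (\<Sum>i\<in>UNIV. frechet_derivative W (at q) ((h $ i) *\<^sub>R axis i 1))"
    by (rule linear_sum[OF lin])
  also have "\<dots> = (\<Sum>i\<in>UNIV. (h $ i) * frechet_derivative W (at q) (axis i 1))"
    by (rule sum.cong[OF refl]) (metis linear_scale[OF lin] real_scaleR_def)
  also have "\<dots> = grad W q \<bullet> h"
    unfolding grad_def inner_vec_def by (simp add: mult.commute)
  finally show ?thesis .
qed

lemma grad_has_derivative:
  fixes W :: "real^'n \<Rightarrow> real"
  assumes "W differentiable at q"
  shows "(W has_derivative (\<lambda>h. grad W q \<bullet> h)) (at q)"
proof -
  have "(W has_derivative frechet_derivative W (at q)) (at q)"
    using assms frechet_derivative_works by blast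
  moreover have "frechet_derivative W (at q) = (\<lambda>h. grad W q \<bullet> h)"
    using grad_repr[OF assms] by auto
  ultimately show ?thesis by simp
qed

lemma grad_comp_cinf:
  fixes W :: "real^'n \<Rightarrow> real"
  assumes "c_inf_on UNIV W"
  shows "c_inf_on UNIV (\<lambda>q. grad W q $ i)"
  unfolding grad_def using c_inf_deriv[OF assms, of "axis i 1"] by (simp add: axis_in_Basis_iff)

lemma grad_lipschitz:
  fixes W :: "real^'n \<Rightarrow> real"
  assumes "c_inf_on UNIV W"
  shows "\<exists>L. L-lipschitz_on (cball c r) (grad W)"
proof -
  have "\<forall>i. \<exists>L. L-lipschitz_on (cball c r) (\<lambda>q. grad W q $ i)"
    using c_inf_lipschitz[OF grad_comp_cinf[OF assms]] by blast
  then obtain L where L: "\<And>i. (L i)-lipschitz_on (cball c r) (\<lambda>q. grad W q $ i)" by metis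
  define M where "M = (\<Sum>i\<in>UNIV. L i)"
  have "M-lipschitz_on (cball c r) (grad W)"
  proof (rule lipschitz_onI)
    show "0 \<le> M" unfolding M_def using lipschitz_on_nonneg[OF L] by (simp add: sum_nonneg)
    fix x y assume xy: "x \<in> cball c r" "y \<in> cball c r"
    have "dist (grad W x) (grad W y) = norm (grad W x - grad W y)" by (simp add: dist_norm)
    also have "\<dots> \<le> (\<Sum>i\<in>UNIV. \<bar>(grad W x - grad W y) $ i\<bar>)" by (rule norm_le_l1_cart)
    also have "\<dots> \<le> (\<Sum>i\<in>UNIV. L i * dist x y)"
    proof (rule sum_mono)
      fix i
      have "\<bar>(grad W x - grad W y) $ i\<bar> = dist (grad W x $ i) (grad W y $ i)" by (simp add: dist_real_def)
      also have "\<dots> \<le> L i * dist x y" using lipschitz_onD[OF L xy] .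
      finally show "\<bar>(grad W x - grad W y) $ i\<bar> \<le> L i * dist x y" .
    qed
    also have "\<dots> = M * dist x y" unfolding M_def by (simp add: sum_distrib_right)
    finally show "dist (grad W x) (grad W y) \<le> M * dist x y" .
  qed
  then show ?thesis by blast
qed

lemma mech_ham_eq: "mech_ham W x = (1/2) * (norm (snd x))\<^sup>2 + W (fst x)"
  by (cases x) (simp add: mech_ham_def)

lemma mech_ham_fun: "mech_ham W = (\<lambda>x. (1/2) * (norm (snd x))\<^sup>2 + W (fst x))"
  using mech_ham_eq by blast

lemma half_norm_sq_deriv:
  "((\<lambda>x::'a::real_inner \<times> 'b::real_inner. (1/2) * (norm (snd x))\<^sup>2) has_derivative (\<lambda>h. snd x \<bullet> snd h)) (at x)"
proof -
  have "((\<lambda>x::'a \<times> 'b. (1/2) * (snd x \<bullet> snd x)) has_derivative (\<lambda>h. (1/2) * (snd x \<bullet> snd h + snd h \<bullet> snd x))) (at x)"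
    by (intro derivative_eq_intros) auto
  then show ?thesis by (simp add: power2_norm_eq_inner inner_commute)
qed

lemma mech_ham_has_derivative:
  fixes W :: "real^'n \<Rightarrow> real"
  assumes "\<And>q. W differentiable at q"
  shows "(mech_ham W has_derivative (\<lambda>h. grad W (fst x) \<bullet> fst h + snd x \<bullet> snd h)) (at x)"
proof -
  have d2: "((\<lambda>x::(real^'n) \<times> (real^'n). W (fst x)) has_derivative (\<lambda>h. grad W (fst x) \<bullet> fst h)) (at x)"
    using diff_chain_at[OF has_derivative_fst[OF has_derivative_ident] grad_has_derivative[OF assms]]
    by (simp add: o_def)
  have "((\<lambda>x::(real^'n) \<times> (real^'n). (1/2) * (norm (snd x))\<^sup>2 + W (fst x)) has_derivative
      (\<lambda>h. snd x \<bullet> snd h + grad W (fst x) \<bullet> fst h)) (at x)"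
    by (rule has_derivative_add[OF half_norm_sq_deriv d2])
  then show ?thesis unfolding mech_ham_fun by (simp add: add.commute)
qed

lemma mech_ham_frechet:
  fixes W :: "real^'n \<Rightarrow> real"
  assumes "\<And>q. W differentiable at q"
  shows "frechet_derivative (mech_ham W) (at x) = (\<lambda>h. grad W (fst x) \<bullet> fst h + snd x \<bullet> snd h)"
  using mech_ham_has_derivative[OF assms] frechet_derivative_eqI by blast

lemma ham_vf_mech:
  fixes W :: "real^'n \<Rightarrow> real"
  assumes "\<And>q. W differentiable at q"
  shows "ham_vf (mech_ham W) x = (snd x, - grad W (fst x))"
  unfolding ham_vf_def mech_ham_frechet[OF assms]
proof (rule the_equality)
  show "\<forall>Y. symp_form (snd x, - grad W (fst x)) Y = - (grad W (fst x) \<bullet> fst Y + snd x \<bullet> snd Y)"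
    by (auto simp: symp_form_def inner_commute)
next
  fix X assume H: "\<forall>Y. symp_form X Y = - (grad W (fst x) \<bullet> fst Y + snd x \<bullet> snd Y)"
  have 1: "snd X \<bullet> a = - grad W (fst x) \<bullet> a" for a
    using H[rule_format, of "(a, 0)"] by (simp add: symp_form_def)
  have 2: "b \<bullet> fst X = snd x \<bullet> b" for b
    using H[rule_format, of "(0, b)"] by (simp add: symp_form_def)
  have "(snd X + grad W (fst x)) \<bullet> (snd X + grad W (fst x)) = 0"
    using 1[of "snd X + grad W (fst x)"] by (simp add: inner_add_left)
  then have "snd X + grad W (fst x) = 0" by simp
  then have "snd X = - grad W (fst x)" by (simp add: eq_neg_iff_add_eq_0)
  moreover have "(fst X - snd x) \<bullet> (fst X - snd x) = 0"
    using 2[of "fst X - snd x"] by (simp add: inner_diff_left inner_commute)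
  then have "fst X = snd x" by simp
  ultimately show "X = (snd x, - grad W (fst x))" by (simp add: prod_eq_iff)
qed

lemma ham_vf_lip:
  fixes W :: "real^'n \<Rightarrow> real"
  assumes W: "c_inf_on UNIV W"
  shows "\<exists>L. L-lipschitz_on (cball c r) (ham_vf (mech_ham W))"
proof -
  have dW: "\<And>q. W differentiable at q" using c_inf_diff[OF W] by auto
  obtain L where L: "L-lipschitz_on (cball (fst c) r) (grad W)" using grad_lipschitz[OF W] by blast
  have L0: "L \<ge> 0" using L lipschitz_on_nonneg by blast
  have "(1 + L)-lipschitz_on (cball c r) (ham_vf (mech_ham W))"
  proof (rule lipschitz_onI)
    show "0 \<le> 1 + L" using L0 by simp
    fix x y assume xy: "x \<in> cball c r" "y \<in> cball c r"
    have fx: "fst x \<in> cball (fst c) r" "fst y \<in> cball (fst c) r"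
      using xy dist_fst_le[of c x] dist_fst_le[of c y] by auto
    have "dist (ham_vf (mech_ham W) x) (ham_vf (mech_ham W) y)
        = norm (snd x - snd y, - (grad W (fst x) - grad W (fst y)))"
      by (simp add: ham_vf_mech[OF dW] dist_norm)
    also have "\<dots> \<le> norm (snd x - snd y) + norm (grad W (fst x) - grad W (fst y))"
      using norm_Pair_le by (metis norm_minus_cancel)
    also have "\<dots> \<le> dist x y + L * dist x y"
    proof (rule add_mono)
      show "norm (snd x - snd y) \<le> dist x y" using dist_snd_le[of x y] by (simp add: dist_norm)
      have "norm (grad W (fst x) - grad W (fst y)) \<le> L * dist (fst x) (fst y)"
        using lipschitz_onD[OF L fx] by (simp add: dist_norm)
      also have "\<dots> \<le> L * dist x y" using L0 dist_fst_le[of x y] by (intro mult_left_mono) auto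
      finally show "norm (grad W (fst x) - grad W (fst y)) \<le> L * dist x y" .
    qed
    finally show "dist (ham_vf (mech_ham W) x) (ham_vf (mech_ham W) y) \<le> (1 + L) * dist x y"
      by (simp add: algebra_simps)
  qed
  then show ?thesis by blast
qed

lemma c_inf_F0:
  fixes v0 :: "real^'n \<Rightarrow> real"
  assumes "c_inf_on UNIV v0"
  shows "c_inf_on UNIV (\<lambda>x::(real^'n) \<times> (real^'n). mech_ham v0 x - E)"
proof -
  have q: "c_inf_on UNIV (\<lambda>x::(real^'n) \<times> (real^'n). (1/2) * (norm (snd x))\<^sup>2 - E)"
  proof (rule c_inf_quad)
    have d: "((\<lambda>x::(real^'n) \<times> (real^'n). (1/2) * (norm (snd x))\<^sup>2 - E) has_derivative (\<lambda>h. snd x \<bullet> snd h)) (at x)" for x :: "(real^'n) \<times> (real^'n)"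
      using has_derivative_diff[OF half_norm_sq_deriv[of x] has_derivative_const[of E]] by simp
    show "(\<lambda>x::(real^'n) \<times> (real^'n). (1/2) * (norm (snd x))\<^sup>2 - E) differentiable at x" for x :: "(real^'n) \<times> (real^'n)"
      using d differentiable_def by blast
    fix b :: "(real^'n) \<times> (real^'n)"
    have "(\<lambda>x. frechet_derivative (\<lambda>x::(real^'n) \<times> (real^'n). (1/2) * (norm (snd x))\<^sup>2 - E) (at x) b) = (\<lambda>x. snd x \<bullet> snd b)"
      using d frechet_derivative_eqI by (metis (no_types, lifting))
    moreover have "bounded_linear (\<lambda>x::(real^'n) \<times> (real^'n). snd x \<bullet> snd b)"
      by (intro bounded_linear_compose[OF bounded_linear_inner_left bounded_linear_snd])
    ultimately show "bounded_linear (\<lambda>x. frechet_derivative (\<lambda>x::(real^'n) \<times> (real^'n). (1/2) * (norm (snd x))\<^sup>2 - E) (at x) b)"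
      by simp
  qed
  have "c_inf_on UNIV (\<lambda>x::(real^'n) \<times> (real^'n). ((1/2) * (norm (snd x))\<^sup>2 - E) + v0 (fst x))"
    by (rule c_inf_add[OF q c_inf_fst[OF assms]])
  then show ?thesis by (simp add: mech_ham_eq algebra_simps)
qed

lemma c_inf_F1:
  "c_inf_on UNIV (\<lambda>x::(real^'n) \<times> (real^'n). fst x \<bullet> snd x - R)"
proof (rule c_inf_quad)
  have d: "((\<lambda>x::(real^'n) \<times> (real^'n). fst x \<bullet> snd x - R) has_derivative (\<lambda>h. fst x \<bullet> snd h + fst h \<bullet> snd x)) (at x)" for x :: "(real^'n) \<times> (real^'n)"
    by (intro derivative_eq_intros) auto
  show "(\<lambda>x::(real^'n) \<times> (real^'n). fst x \<bullet> snd x - R) differentiable at x" for x :: "(real^'n) \<times> (real^'n)"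
    using d differentiable_def by blast
  fix b :: "(real^'n) \<times> (real^'n)"
  have "(\<lambda>x. frechet_derivative (\<lambda>x::(real^'n) \<times> (real^'n). fst x \<bullet> snd x - R) (at x) b) = (\<lambda>x. fst x \<bullet> snd b + fst b \<bullet> snd x)"
    using d frechet_derivative_eqI by (metis (no_types, lifting))
  moreover have "bounded_linear (\<lambda>x::(real^'n) \<times> (real^'n). fst x \<bullet> snd b + fst b \<bullet> snd x)"
    by (intro bounded_linear_add bounded_linear_compose[OF bounded_linear_inner_left bounded_linear_fst]
        bounded_linear_compose[OF bounded_linear_inner_right bounded_linear_snd])
  ultimately show "bounded_linear (\<lambda>x. frechet_derivative (\<lambda>x::(real^'n) \<times> (real^'n). fst x \<bullet> snd x - R) (at x) b)"
    by simp
qed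

lemma energy_conserve:
  fixes W :: "real^'n \<Rightarrow> real" and \<gamma> :: "real \<Rightarrow> (real^'n) \<times> (real^'n)"
  assumes dW: "\<And>q. W differentiable at q"
    and J: "convex J" "t0 \<in> J" "t \<in> J"
    and sol: "\<And>s. s \<in> J \<Longrightarrow> (\<gamma> has_vector_derivative ham_vf (mech_ham W) (\<gamma> s)) (at s within J)"
  shows "mech_ham W (\<gamma> t) = mech_ham W (\<gamma> t0)"
proof -
  have "\<exists>c. \<forall>s\<in>J. mech_ham W (\<gamma> s) = c"
  proof (rule has_derivative_zero_constant[OF J(1)])
    fix s assume s: "s \<in> J"
    have g: "(\<gamma> has_derivative (\<lambda>u. u *\<^sub>R ham_vf (mech_ham W) (\<gamma> s))) (at s within J)"
      using sol[OF s] by (simp add: has_vector_derivative_def)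
    have "((\<lambda>s. mech_ham W (\<gamma> s)) has_derivative
        (\<lambda>u. grad W (fst (\<gamma> s)) \<bullet> fst (u *\<^sub>R ham_vf (mech_ham W) (\<gamma> s)) + snd (\<gamma> s) \<bullet> snd (u *\<^sub>R ham_vf (mech_ham W) (\<gamma> s)))) (at s within J)"
      by (rule has_derivative_compose[OF g mech_ham_has_derivative[OF dW]])
    moreover have "(\<lambda>u. grad W (fst (\<gamma> s)) \<bullet> fst (u *\<^sub>R ham_vf (mech_ham W) (\<gamma> s)) + snd (\<gamma> s) \<bullet> snd (u *\<^sub>R ham_vf (mech_ham W) (\<gamma> s))) = (\<lambda>u. 0)"
      by (simp add: ham_vf_mech[OF dW] inner_commute)
    ultimately show "((\<lambda>s. mech_ham W (\<gamma> s)) has_derivative (\<lambda>u. 0)) (at s within J)" by simp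
  qed
  then show ?thesis using J by auto
qed

lemma mech_apriori:
  fixes W :: "real^'n \<Rightarrow> real"
  assumes dW: "\<And>q. W differentiable at q" and bdd: "bdd_below (range W)" and T: "T \<ge> 0"
  shows "\<exists>\<rho>. \<forall>a b \<gamma>. -T \<le> a \<longrightarrow> a \<le> 0 \<longrightarrow> 0 \<le> b \<longrightarrow> b \<le> T \<longrightarrow> \<gamma> 0 = x0 \<longrightarrow>
        (\<forall>t\<in>{a..b}. (\<gamma> has_vector_derivative ham_vf (mech_ham W) (\<gamma> t)) (at t within {a..b})) \<longrightarrow>
        (\<forall>t\<in>{a..b}. dist (\<gamma> t) x0 \<le> \<rho>)"
proof -
  obtain m where m: "\<And>q. m \<le> W q" using bdd unfolding bdd_below_def by auto
  define P where "P = sqrt (2 * max 0 (mech_ham W x0 - m))"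
  have P0: "P \<ge> 0" unfolding P_def by simp
  have pb: "norm (snd y) \<le> P" if "mech_ham W y = mech_ham W x0" for y
  proof -
    have "(norm (snd y))\<^sup>2 = 2 * (mech_ham W x0 - W (fst y))" using that by (simp add: mech_ham_eq)
    also have "\<dots> \<le> 2 * max 0 (mech_ham W x0 - m)"
    proof -
      have "mech_ham W x0 - W (fst y) \<le> max 0 (mech_ham W x0 - m)"
        using m[of "fst y"] by (simp add: le_max_iff_disj)
      then show ?thesis by simp
    qed
    finally show ?thesis unfolding P_def by (rule real_le_rsqrt)
  qed
  show ?thesis
  proof (intro exI[of _ "P * T + 2 * P"] allI impI ballI)
    fix a b :: real and \<gamma> :: "real \<Rightarrow> (real^'n) \<times> (real^'n)" and t
    assume ab: "-T \<le> a" "a \<le> 0" "0 \<le> b" "b \<le> T" and g0: "\<gamma> 0 = x0"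
      and sol: "\<forall>t\<in>{a..b}. (\<gamma> has_vector_derivative ham_vf (mech_ham W) (\<gamma> t)) (at t within {a..b})"
      and t: "t \<in> {a..b}"
    have zab: "0 \<in> {a..b}" using ab by auto
    have en: "mech_ham W (\<gamma> s) = mech_ham W x0" if "s \<in> {a..b}" for s
      using energy_conserve[OF dW convex_real_interval(5) zab that] sol g0 by auto
    have q: "norm (fst (\<gamma> t) - fst (\<gamma> 0)) \<le> P * norm (t - 0)"
    proof (rule differentiable_bound[OF convex_real_interval(5) _ _ t zab])
      fix s assume s: "s \<in> {a..b}"
      have "(\<gamma> has_derivative (\<lambda>u. u *\<^sub>R ham_vf (mech_ham W) (\<gamma> s))) (at s within {a..b})"
        using sol s by (simp add: has_vector_derivative_def)
      then show "((\<lambda>s. fst (\<gamma> s)) has_derivative (\<lambda>u. u *\<^sub>R snd (\<gamma> s))) (at s within {a..b})"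
        using has_derivative_fst by (fastforce simp: ham_vf_mech[OF dW])
      have "onorm (\<lambda>u::real. u *\<^sub>R snd (\<gamma> s)) = norm (snd (\<gamma> s))"
        using onorm_scaleR_left[OF bounded_linear_ident, of "snd (\<gamma> s)"] by (simp add: onorm_id)
      then show "onorm (\<lambda>u::real. u *\<^sub>R snd (\<gamma> s)) \<le> P" using pb[OF en[OF s]] by simp
    qed
    have "\<gamma> t - x0 = (fst (\<gamma> t) - fst x0, snd (\<gamma> t) - snd x0)" by (simp add: prod_eq_iff)
    then have "dist (\<gamma> t) x0 = norm (fst (\<gamma> t) - fst x0, snd (\<gamma> t) - snd x0)"
      by (simp add: dist_norm)
    also have "\<dots> \<le> norm (fst (\<gamma> t) - fst x0) + norm (snd (\<gamma> t) - snd x0)" by (rule norm_Pair_le)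
    also have "\<dots> \<le> P * T + 2 * P"
    proof (rule add_mono)
      have "norm (fst (\<gamma> t) - fst x0) \<le> P * norm t" using q g0 by simp
      also have "\<dots> \<le> P * T" using t ab P0 by (intro mult_left_mono) auto
      finally show "norm (fst (\<gamma> t) - fst x0) \<le> P * T" .
      have "norm (snd (\<gamma> t) - snd x0) \<le> norm (snd (\<gamma> t)) + norm (snd x0)" by (rule norm_triangle_ineq4)
      also have "\<dots> \<le> P + P" using pb[OF en[OF t]] pb[of x0] by (intro add_mono) auto
      finally show "norm (snd (\<gamma> t) - snd x0) \<le> 2 * P" by simp
    qed
    finally show "dist (\<gamma> t) x0 \<le> P * T + 2 * P" .
  qed
qed

locale mech =
  fixes W :: "real^'n \<Rightarrow> real"
  assumes W: "c_inf_on UNIV W" and bddW: "bdd_below (range W)"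
begin

abbreviation "X \<equiv> ham_vf (mech_ham W)"

lemma dW: "W differentiable at q" using c_inf_diff[OF W] by auto

lemma X_eq: "X x = (snd x, - grad W (fst x))" by (rule ham_vf_mech[OF dW])

lemma loclip: "\<exists>r>0. \<exists>L. L-lipschitz_on (cball x r) X"
  using ham_vf_lip[OF W] zero_less_one by blast

lemma curve_exists: "\<exists>\<gamma>. integral_curve X \<gamma> x"
  unfolding integral_curve_def
  using ode_global_apriori[of X x] ham_vf_lip[OF W] mech_apriori[OF dW bddW] by blast

lemma curve_unique:
  assumes "integral_curve X \<gamma>1 x" "integral_curve X \<gamma>2 x"
  shows "\<gamma>1 = \<gamma>2"
proof -
  have "\<forall>t\<in>UNIV. \<gamma>1 t = \<gamma>2 t"
    by (rule ode_unique_interval[OF loclip, of UNIV 0]) (use assms in \<open>auto simp: integral_curve_def\<close>)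
  then show ?thesis by auto
qed

lemma flow_curve: "integral_curve X (\<lambda>t. flow X t x) x"
proof -
  have "\<exists>!\<gamma>. integral_curve X \<gamma> x" using curve_exists curve_unique by blast
  then have "integral_curve X (THE \<gamma>. integral_curve X \<gamma> x) x" by (rule theI')
  then show ?thesis unfolding flow_def by (simp add: eta_contract_eq)
qed

lemma flow_eq: "integral_curve X \<gamma> x \<Longrightarrow> flow X t x = \<gamma> t"
  using flow_curve curve_unique by metis

lemma flow_0: "flow X 0 x = x" using flow_curve unfolding integral_curve_def by blast

lemma flow_deriv: "((\<lambda>t. flow X t x) has_vector_derivative X (flow X t x)) (at t)"
  using flow_curve unfolding integral_curve_def by blast

lemma flow_cont: "continuous_on S (\<lambda>t. flow X t x)"
  using flow_deriv has_vector_derivative_continuous continuous_at_imp_continuous_on by blast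

lemma flow_energy: "mech_ham W (flow X t x) = mech_ham W x"
proof -
  have "mech_ham W (flow X t x) = mech_ham W (flow X 0 x)"
    by (rule energy_conserve[OF dW convex_UNIV]) (auto intro: flow_deriv)
  then show ?thesis by (simp add: flow_0)
qed

lemma flow_group: "flow X s (flow X u x) = flow X (s + u) x"
proof -
  have "integral_curve X (\<lambda>s. flow X (s + u) x) (flow X u x)"
    unfolding integral_curve_def
  proof (intro conjI allI)
    show "flow X (0 + u) x = flow X u x" by simp
    fix s
    have 1: "((\<lambda>s. s + u) has_vector_derivative 1) (at s)" by (auto intro!: derivative_eq_intros)
    have 2: "((\<lambda>t. flow X t x) has_vector_derivative X (flow X (s + u) x)) (at (s + u))" by (rule flow_deriv)
    show "((\<lambda>s. flow X (s + u) x) has_vector_derivative X (flow X (s + u) x)) (at s)"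
      using vector_diff_chain_at[OF 1 2] by (simp add: o_def)
  qed
  then show ?thesis using flow_eq by blast
qed

end

lemma A_has_derivative:
  "((\<lambda>x::(real^'n) \<times> (real^'n). fst x \<bullet> snd x) has_derivative (\<lambda>h. fst y \<bullet> snd h + fst h \<bullet> snd y)) (at y)"
  by (intro derivative_eq_intros) auto

context mech
begin

lemma A_comp_deriv:
  assumes "(\<gamma> has_vector_derivative X (\<gamma> t)) (at t)"
  shows "((\<lambda>s. fst (\<gamma> s) \<bullet> snd (\<gamma> s)) has_real_derivative
           ((norm (snd (\<gamma> t)))\<^sup>2 - fst (\<gamma> t) \<bullet> grad W (fst (\<gamma> t)))) (at t)"
proof -
  have g: "(\<gamma> has_derivative (\<lambda>u. u *\<^sub>R X (\<gamma> t))) (at t)"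
    using assms by (simp add: has_vector_derivative_def)
  have "((\<lambda>s. fst (\<gamma> s) \<bullet> snd (\<gamma> s)) has_derivative
      (\<lambda>u. fst (\<gamma> t) \<bullet> snd (u *\<^sub>R X (\<gamma> t)) + fst (u *\<^sub>R X (\<gamma> t)) \<bullet> snd (\<gamma> t))) (at t)"
    using has_derivative_compose[OF g A_has_derivative] by simp
  moreover have "(\<lambda>u. fst (\<gamma> t) \<bullet> snd (u *\<^sub>R X (\<gamma> t)) + fst (u *\<^sub>R X (\<gamma> t)) \<bullet> snd (\<gamma> t))
      = (\<lambda>u. ((norm (snd (\<gamma> t)))\<^sup>2 - fst (\<gamma> t) \<bullet> grad W (fst (\<gamma> t))) * u)"
    by (auto simp: X_eq power2_norm_eq_inner algebra_simps)
  ultimately show ?thesis by (simp add: has_field_derivative_def)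
qed

end

locale vir = mech v0 for v0 :: "real^'n \<Rightarrow> real" +
  fixes E :: real
  assumes bddA: "bdd_above (range (\<lambda>q. v0 q + (1/2) * (q \<bullet> grad v0 q)))"
    and Egt: "E > (SUP q. v0 q + (1/2) * (q \<bullet> grad v0 q))"
begin

definition "eps = E - (SUP q. v0 q + (1/2) * (q \<bullet> grad v0 q))"

lemma eps_pos: "eps > 0" using Egt unfolding eps_def by simp

lemma virial:
  assumes "mech_ham v0 x = E"
  shows "(norm (snd x))\<^sup>2 - fst x \<bullet> grad v0 (fst x) \<ge> 2 * eps"
proof -
  have "v0 (fst x) + (1/2) * (fst x \<bullet> grad v0 (fst x)) \<le> (SUP q. v0 q + (1/2) * (q \<bullet> grad v0 q))"
    by (rule cSUP_upper[OF UNIV_I bddA])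
  moreover have "(norm (snd x))\<^sup>2 = 2 * (E - v0 (fst x))" using assms by (simp add: mech_ham_eq)
  ultimately show ?thesis unfolding eps_def by simp
qed

lemma virial_strict:
  assumes "mech_ham v0 x = E"
  shows "E > v0 (fst x) + (1/2) * (fst x \<bullet> grad v0 (fst x))"
proof -
  have "v0 (fst x) + (1/2) * (fst x \<bullet> grad v0 (fst x)) \<le> (SUP q. v0 q + (1/2) * (q \<bullet> grad v0 q))"
    by (rule cSUP_upper[OF UNIV_I bddA])
  then show ?thesis using Egt by simp
qed

abbreviation "phi x t \<equiv> fst (flow X t x) \<bullet> snd (flow X t x)"

lemma phi_mono:
  assumes x: "mech_ham v0 x = E" and t: "t1 \<le> t2"
  shows "phi x t1 + 2 * eps * (t2 - t1) \<le> phi x t2"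
proof -
  have "(\<lambda>t. phi x t - 2 * eps * t) t1 \<le> (\<lambda>t. phi x t - 2 * eps * t) t2"
  proof (rule DERIV_nonneg_imp_nondecreasing[OF t])
    fix t
    have en: "mech_ham v0 (flow X t x) = E" using flow_energy x by simp
    have "((\<lambda>t. phi x t - 2 * eps * t) has_real_derivative
        (((norm (snd (flow X t x)))\<^sup>2 - fst (flow X t x) \<bullet> grad v0 (fst (flow X t x))) - 2 * eps * 1)) (at t)"
    proof (rule DERIV_diff)
      show "((\<lambda>t. phi x t) has_real_derivative
        ((norm (snd (flow X t x)))\<^sup>2 - fst (flow X t x) \<bullet> grad v0 (fst (flow X t x)))) (at t)"
        by (rule A_comp_deriv[of "\<lambda>t. flow X t x", OF flow_deriv])
      show "((\<lambda>t. 2 * eps * t) has_real_derivative 2 * eps * 1) (at t)"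
        by (rule DERIV_cmult) (rule DERIV_ident)
    qed
    then show "\<exists>y. ((\<lambda>t. phi x t - 2 * eps * t) has_real_derivative y) (at t) \<and> 0 \<le> y"
      using virial[OF en] by fastforce
  qed
  then show ?thesis by (simp add: algebra_simps)
qed

lemma phi_cont: "continuous_on S (phi x)"
  by (intro continuous_intros continuous_on_fst continuous_on_snd flow_cont)

end

lemma dH_nonzero:
  fixes W :: "real^'n \<Rightarrow> real"
  assumes dW: "\<And>q. W differentiable at q" and nc: "\<not> critical_value W E" and x: "mech_ham W x = E"
  shows "frechet_derivative (mech_ham W) (at x) \<noteq> (\<lambda>_. 0)"
proof
  assume H: "frechet_derivative (mech_ham W) (at x) = (\<lambda>_. 0)"
  have D: "grad W (fst x) \<bullet> fst h + snd x \<bullet> snd h = 0" for h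
    using H mech_ham_frechet[OF dW, of x] by (metis (no_types, lifting))
  have "snd x \<bullet> snd x = 0" using D[of "(0, snd x)"] by simp
  then have p: "snd x = 0" by simp
  have "grad W (fst x) \<bullet> grad W (fst x) = 0" using D[of "(grad W (fst x), 0)"] by simp
  then have g: "grad W (fst x) = 0" by simp
  have "W (fst x) = E" using x p by (simp add: mech_ham_eq)
  then have "critical_value W E" using g unfolding critical_value_def by blast
  then show False using nc by blast
qed

lemma compact_part:
  fixes W :: "real^'n \<Rightarrow> real"
  assumes dW: "\<And>q. W differentiable at q" and bdd: "bdd_below (range W)" and S: "compact S"
  shows "compact ({x. mech_ham W x \<le> E} \<inter> (S \<times> UNIV))"
proof -
  have cH: "continuous_on UNIV (mech_ham W)"
    using mech_ham_has_derivative[OF dW] has_derivative_continuous continuous_at_imp_continuous_on by blast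
  have "closed {x. mech_ham W x \<le> E}"
    using closed_Collect_le[OF cH continuous_on_const] by simp
  moreover have "closed (S \<times> (UNIV :: (real^'n) set))"
    using S compact_imp_closed closed_Times closed_UNIV by blast
  ultimately have cl: "closed ({x. mech_ham W x \<le> E} \<inter> (S \<times> UNIV))" by blast
  obtain m where m: "\<And>q. m \<le> W q" using bdd unfolding bdd_below_def by auto
  obtain Bq where Bq: "\<And>q. q \<in> S \<Longrightarrow> norm q \<le> Bq" using compact_imp_bounded[OF S] unfolding bounded_iff by blast
  have "bounded ({x. mech_ham W x \<le> E} \<inter> (S \<times> UNIV))"
    unfolding bounded_iff
  proof (intro exI ballI)
    fix x assume x: "x \<in> {x. mech_ham W x \<le> E} \<inter> (S \<times> UNIV)"
    have "(norm (snd x))\<^sup>2 \<le> 2 * (E - m)" using x m[of "fst x"] by (auto simp: mech_ham_eq mem_Times_iff)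
    also have "\<dots> \<le> 2 * \<bar>E - m\<bar>" by (intro mult_left_mono abs_ge_self) simp
    finally have "norm (snd x) \<le> sqrt (2 * \<bar>E - m\<bar>)" by (rule real_le_rsqrt)
    moreover have "norm (fst x) \<le> Bq" using x Bq by (auto simp: mem_Times_iff)
    moreover have "norm x \<le> norm (fst x) + norm (snd x)"
      using norm_Pair_le[of "fst x" "snd x"] by simp
    ultimately show "norm x \<le> Bq + sqrt (2 * \<bar>E - m\<bar>)" by simp
  qed
  then show ?thesis using cl compact_eq_bounded_closed by blast
qed

lemma supp_fst:
  fixes v :: "real^'n \<Rightarrow> real"
  shows "supp (\<lambda>x::(real^'n) \<times> (real^'n). v (fst x)) = supp v \<times> UNIV"
proof -
  have "{x::(real^'n) \<times> (real^'n). v (fst x) \<noteq> 0} = {q. v q \<noteq> 0} \<times> UNIV" by auto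
  then show ?thesis unfolding supp_def by (simp add: closure_Times)
qed

context vir
begin

lemma nontrap:
  assumes K: "compact K" "K \<subseteq> {x. mech_ham v0 x = E}"
  shows "\<exists>T>0. \<forall>x\<in>K. \<forall>t. T \<le> \<bar>t\<bar> \<longrightarrow> flow X t x \<notin> K"
proof -
  have "continuous_on K (\<lambda>x::(real^'n) \<times> (real^'n). fst x \<bullet> snd x)" by (intro continuous_intros)
  then have "bounded ((\<lambda>x. fst x \<bullet> snd x) ` K)" by (intro compact_imp_bounded compact_continuous_image K(1))
  then obtain B where B: "\<And>x. x \<in> K \<Longrightarrow> \<bar>fst x \<bullet> snd x\<bar> \<le> B" unfolding bounded_iff by auto
  define B' where "B' = \<bar>B\<bar>"
  have B': "\<And>x. x \<in> K \<Longrightarrow> \<bar>fst x \<bullet> snd x\<bar> \<le> B'" using B unfolding B'_def by force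
  define T where "T = (2 * B' + 1) / (2 * eps)"
  have T0: "T > 0" unfolding T_def B'_def using eps_pos by simp
  have Teq: "2 * eps * T = 2 * B' + 1" unfolding T_def using eps_pos by simp
  show ?thesis
  proof (intro exI[of _ T] conjI T0 ballI allI impI)
    fix x t assume x: "x \<in> K" and t: "T \<le> \<bar>t\<bar>"
    have xE: "mech_ham v0 x = E" using x K(2) by auto
    have p0: "phi x 0 = fst x \<bullet> snd x" by (simp add: flow_0)
    show "flow X t x \<notin> K"
    proof
      assume inK: "flow X t x \<in> K"
      have b: "\<bar>phi x t\<bar> \<le> B'" using B'[OF inK] .
      have b0: "\<bar>phi x 0\<bar> \<le> B'" using B'[OF x] p0 by simp
      show False
      proof (cases "t \<ge> 0")
        case True
        then have "T \<le> t" using t by simp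
        have "phi x 0 + 2 * eps * (t - 0) \<le> phi x t" by (rule phi_mono[OF xE True])
        moreover have "2 * eps * T \<le> 2 * eps * t" using \<open>T \<le> t\<close> eps_pos by (intro mult_left_mono) auto
        ultimately show False using b b0 Teq by (simp add: abs_le_iff; linarith)
      next
        case False
        then have "T \<le> - t" using t by simp
        have "phi x t + 2 * eps * (0 - t) \<le> phi x 0" by (rule phi_mono[OF xE]) (use False in simp)
        moreover have "2 * eps * T \<le> 2 * eps * (- t)" using \<open>T \<le> - t\<close> eps_pos by (intro mult_left_mono) auto
        ultimately show False using b b0 Teq by (simp add: abs_le_iff; linarith)
      qed
    qed
  qed
qed

lemma sections_ex:
  assumes x: "mech_ham v0 x = E"
  shows "\<exists>!zt. fst zt \<in> {(q, p). mech_ham v0 (q, p) = E \<and> q \<bullet> p = R} \<and> x = flow X (snd zt) (fst zt)"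
proof -
  let ?G = "{(q, p). mech_ham v0 (q, p) = E \<and> q \<bullet> p = R}"
  have memG: "z \<in> ?G \<longleftrightarrow> mech_ham v0 z = E \<and> fst z \<bullet> snd z = R" for z by (cases z) auto
  define t1 where "t1 = min 0 ((R - phi x 0) / (2 * eps))"
  define t2 where "t2 = max 0 ((R - phi x 0) / (2 * eps))"
  have e: "eps > 0" by (rule eps_pos)
  have "phi x t1 + 2 * eps * (0 - t1) \<le> phi x 0" by (rule phi_mono[OF x]) (simp add: t1_def)
  moreover have "2 * eps * t1 \<le> R - phi x 0"
  proof -
    have "2 * eps * t1 \<le> 2 * eps * ((R - phi x 0) / (2 * eps))" using e unfolding t1_def by (intro mult_left_mono) auto
    then show ?thesis using e by simp
  qed
  ultimately have f1: "phi x t1 \<le> R" by simp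
  have "phi x 0 + 2 * eps * (t2 - 0) \<le> phi x t2" by (rule phi_mono[OF x]) (simp add: t2_def)
  moreover have "2 * eps * t2 \<ge> R - phi x 0"
  proof -
    have "2 * eps * t2 \<ge> 2 * eps * ((R - phi x 0) / (2 * eps))" using e unfolding t2_def by (intro mult_left_mono) auto
    then show ?thesis using e by simp
  qed
  ultimately have f2: "R \<le> phi x t2" by simp
  have "t1 \<le> t2" unfolding t1_def t2_def by simp
  then obtain ts where ts: "phi x ts = R" using IVT'[of "phi x" t1 R t2] f1 f2 phi_cont by blast
  define z where "z = flow X ts x"
  have zG: "z \<in> ?G" unfolding memG z_def using ts flow_energy x by simp
  have xz: "x = flow X (- ts) z" unfolding z_def by (simp add: flow_group flow_0)
  show ?thesis
  proof (rule ex1I[of _ "(z, - ts)"])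
    show "fst (z, - ts) \<in> ?G \<and> x = flow X (snd (z, - ts)) (fst (z, - ts))" using zG xz by simp
  next
    fix zt assume H: "fst zt \<in> ?G \<and> x = flow X (snd zt) (fst zt)"
    obtain z1 s1 where zt: "zt = (z1, s1)" by (cases zt)
    have z1G: "z1 \<in> ?G" and xz1: "x = flow X s1 z1" using H zt by auto
    have hback: "flow X (- s1) x = z1" using xz1 by (simp add: flow_group flow_0)
    have phis: "phi x (- s1) = R" using hback z1G memG by auto
    have "s1 = - ts"
    proof (rule ccontr)
      assume ne: "s1 \<noteq> - ts"
      show False
      proof (cases "- s1 < ts")
        case True
        have "phi x (- s1) + 2 * eps * (ts - - s1) \<le> phi x ts" by (rule phi_mono[OF x]) (use True in simp)
        then have "2 * eps * (ts - - s1) \<le> 0" using phis ts by simp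
        moreover have "2 * eps * (ts - - s1) > 0" using e True by (intro mult_pos_pos) auto
        ultimately show False by simp
      next
        case False
        then have lt: "ts < - s1" using ne by linarith
        have "phi x ts + 2 * eps * (- s1 - ts) \<le> phi x (- s1)" by (rule phi_mono[OF x]) (use lt in simp)
        then have "2 * eps * (- s1 - ts) \<le> 0" using phis ts by simp
        moreover have "2 * eps * (- s1 - ts) > 0" using e lt by (intro mult_pos_pos) auto
        ultimately show False by simp
      qed
    qed
    moreover have "z1 = z" using hback \<open>s1 = - ts\<close> unfolding z_def by simp
    ultimately show "zt = (z, - ts)" using zt by simp
  qed
qed

end

lemma indep_alg:
  fixes q p g :: "real^'n" and c0 c1 :: real
  assumes Hw: "\<And>a b. c0 * (g \<bullet> a + p \<bullet> b) + c1 * (q \<bullet> b + a \<bullet> p) = 0"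
    and ne: "c0 \<noteq> 0 \<or> c1 \<noteq> 0"
  shows "p \<bullet> p = q \<bullet> g"
proof -
  define u where "u = c0 *\<^sub>R g + c1 *\<^sub>R p"
  define w where "w = c0 *\<^sub>R p + c1 *\<^sub>R q"
  have e1: "u \<bullet> u = c0 * (g \<bullet> u) + c1 * (u \<bullet> p)"
    by (subst (1) u_def) (simp add: inner_add_left inner_commute[of p u])
  have e2: "w \<bullet> w = c0 * (p \<bullet> w) + c1 * (q \<bullet> w)"
    by (subst (1) w_def) (simp add: inner_add_left)
  have "c0 * (g \<bullet> u) + c0 * (p \<bullet> w) + (c1 * (q \<bullet> w) + c1 * (u \<bullet> p)) = 0"
    using Hw[of u w] by (simp only: distrib_left)
  then have "u \<bullet> u + w \<bullet> w = 0" using e1 e2 by linarith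
  then have "u \<bullet> u = 0 \<and> w \<bullet> w = 0"
    using add_nonneg_eq_0_iff[OF inner_ge_zero[of u] inner_ge_zero[of w]] by blast
  then have u0: "c0 *\<^sub>R g + c1 *\<^sub>R p = 0" and w0: "c0 *\<^sub>R p + c1 *\<^sub>R q = 0"
    unfolding u_def w_def by auto
  show ?thesis
  proof (cases "c0 = 0")
    case True
    then have c1: "c1 \<noteq> 0" using ne by simp
    have "c1 *\<^sub>R p = 0" using u0 True by simp
    then have "p = 0" using c1 by simp
    moreover have "c1 *\<^sub>R q = 0" using w0 True by simp
    then have "q = 0" using c1 by simp
    ultimately show ?thesis by simp
  next
    case False
    define \<mu> where "\<mu> = - c1 / c0"
    have a: "c0 *\<^sub>R p = - (c1 *\<^sub>R q)" using w0 by (simp add: eq_neg_iff_add_eq_0)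
    have "p = (1 / c0) *\<^sub>R (c0 *\<^sub>R p)" using False by simp
    also have "\<dots> = \<mu> *\<^sub>R q" unfolding a \<mu>_def by simp
    finally have pe: "p = \<mu> *\<^sub>R q" .
    have b: "c0 *\<^sub>R g = - (c1 *\<^sub>R p)" using u0 by (simp add: eq_neg_iff_add_eq_0)
    have "g = (1 / c0) *\<^sub>R (c0 *\<^sub>R g)" using False by simp
    also have "\<dots> = \<mu> *\<^sub>R p" unfolding b \<mu>_def by simp
    finally have ge: "g = \<mu> *\<^sub>R p" .
    have "q \<bullet> g = \<mu> * (q \<bullet> p)" unfolding ge by simp
    moreover have "p \<bullet> p = (\<mu> *\<^sub>R q) \<bullet> p" using pe by (rule arg_cong)
    then have "p \<bullet> p = \<mu> * (q \<bullet> p)" by simp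
    ultimately show ?thesis by simp
  qed
qed


lemma dim_pp: "DIM((real^'n) \<times> (real^'n)) = 2 * CARD('n)" by simp

lemma card_ge1: "CARD('n::finite) \<ge> 1" by (simp add: Suc_le_eq)

lemma k_eq: "DIM((real^'n) \<times> (real^'n)) - (2 * CARD('n) - 2) = 2"
  using dim_pp[where 'n='n] card_ge1[where 'n='n] by simp

lemma all2: "(\<forall>i<(2::nat). P i) = (P 0 \<and> P 1)" by (auto simp: less_2_cases_iff)

lemma F0_frechet:
  fixes W :: "real^'n \<Rightarrow> real"
  assumes dW: "\<And>q. W differentiable at q"
  shows "frechet_derivative (\<lambda>x. mech_ham W x - E) (at y) w = grad W (fst y) \<bullet> fst w + snd y \<bullet> snd w"
proof -
  have "((\<lambda>x. mech_ham W x - E) has_derivative (\<lambda>h. grad W (fst y) \<bullet> fst h + snd y \<bullet> snd h - 0)) (at y)"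
    by (rule has_derivative_diff[OF mech_ham_has_derivative[OF dW] has_derivative_const])
  then have "frechet_derivative (\<lambda>x. mech_ham W x - E) (at y) = (\<lambda>h. grad W (fst y) \<bullet> fst h + snd y \<bullet> snd h - 0)"
    by (rule frechet_derivative_eqI)
  then show ?thesis by simp
qed

lemma F1_frechet:
  "frechet_derivative (\<lambda>x::(real^'n) \<times> (real^'n). fst x \<bullet> snd x - R) (at y) w = fst y \<bullet> snd w + fst w \<bullet> snd y"
proof -
  have "((\<lambda>x::(real^'n) \<times> (real^'n). fst x \<bullet> snd x - R) has_derivative (\<lambda>h. fst y \<bullet> snd h + fst h \<bullet> snd y - 0)) (at y)"
    by (rule has_derivative_diff[OF A_has_derivative has_derivative_const])
  then have "frechet_derivative (\<lambda>x::(real^'n) \<times> (real^'n). fst x \<bullet> snd x - R) (at y) = (\<lambda>h. fst y \<bullet> snd h + fst h \<bullet> snd y - 0)"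
    by (rule frechet_derivative_eqI)
  then show ?thesis by simp
qed

context vir
begin

lemma tangent:
  assumes x: "x \<in> {(q, p). mech_ham v0 (q, p) = E \<and> q \<bullet> p = R}"
  shows "X x \<notin> tangent_space {(q, p). mech_ham v0 (q, p) = E \<and> q \<bullet> p = R} x"
proof
  let ?G = "{(q, p). mech_ham v0 (q, p) = E \<and> q \<bullet> p = R}"
  have memG: "z \<in> ?G \<longleftrightarrow> mech_ham v0 z = E \<and> fst z \<bullet> snd z = R" for z by (cases z) auto
  assume "X x \<in> tangent_space ?G x"
  then obtain \<gamma> e where e: "e > 0" and g0: "\<gamma> 0 = x" and gG: "\<gamma> ` {-e<..<e} \<subseteq> ?G"
    and gd: "(\<gamma> has_vector_derivative X x) (at 0)"
    unfolding tangent_space_def by blast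
  define D where "D = (norm (snd x))\<^sup>2 - fst x \<bullet> grad v0 (fst x)"
  have xE: "mech_ham v0 x = E" using x memG by auto
  have Dpos: "D > 0" unfolding D_def using virial[OF xE] eps_pos by simp
  have d1: "((\<lambda>s. fst (\<gamma> s) \<bullet> snd (\<gamma> s)) has_derivative (\<lambda>u. D * u)) (at 0)"
    using A_comp_deriv[of \<gamma> 0] gd g0 unfolding D_def by (simp add: has_field_derivative_def)
  have "((\<lambda>s::real. R) has_derivative (\<lambda>u. 0)) (at 0)" by (rule has_derivative_const)
  then have d2: "((\<lambda>s. fst (\<gamma> s) \<bullet> snd (\<gamma> s)) has_derivative (\<lambda>u. 0)) (at 0)"
  proof (rule has_derivative_transform_within_open[of _ _ _ _ "{-e<..<e}"])
    show "open {-e<..<e}" by simp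
    show "0 \<in> {-e<..<e}" using e by simp
    fix s assume "s \<in> {-e<..<e}"
    then have "\<gamma> s \<in> ?G" by (rule subsetD[OF gG imageI])
    then show "R = fst (\<gamma> s) \<bullet> snd (\<gamma> s)" using memG by auto
  qed
  have "(\<lambda>u::real. D * u) = (\<lambda>u. 0)" using has_derivative_unique[OF d1 d2] .
  then have "D * 1 = 0" by metis
  then show False using Dpos by simp
qed

lemma submanifold:
  "smooth_submanifold {(q, p). mech_ham v0 (q, p) = E \<and> q \<bullet> p = R} (2 * CARD('n) - 2)"
proof -
  let ?G = "{(q, p). mech_ham v0 (q, p) = E \<and> q \<bullet> p = R}"
  have memG: "z \<in> ?G \<longleftrightarrow> mech_ham v0 z = E \<and> fst z \<bullet> snd z = R" for z by (cases z) auto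
  define F where "F i = (if i = (0::nat) then (\<lambda>x::(real^'n) \<times> (real^'n). mech_ham v0 x - E)
                           else (\<lambda>x. fst x \<bullet> snd x - R))" for i
  have F0: "F 0 = (\<lambda>x. mech_ham v0 x - E)" unfolding F_def by simp
  have F1: "F (Suc 0) = (\<lambda>x. fst x \<bullet> snd x - R)" unfolding F_def by simp
  have ci: "\<forall>i<2. c_inf_on UNIV (F i)"
    unfolding all2 using c_inf_F0[OF W, of E] c_inf_F1[of R] by (simp add: F0 F1)
  have seteq: "?G \<inter> UNIV = {y \<in> UNIV. \<forall>i<2. F i y = 0}"
    unfolding all2 using memG by (auto simp: F0 F1)
  have indep: "\<forall>y\<in>?G \<inter> UNIV. \<forall>c. (\<forall>w. (\<Sum>i<2. c i * frechet_derivative (F i) (at y) w) = 0) \<longrightarrow> (\<forall>i<2. c i = 0)"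
  proof (rule ballI, rule allI, rule impI)
    fix y and c :: "nat \<Rightarrow> real"
    assume yG: "y \<in> ?G \<inter> UNIV" and H: "\<forall>w. (\<Sum>i<2. c i * frechet_derivative (F i) (at y) w) = 0"
    have yE: "mech_ham v0 y = E" using yG memG by auto
    have Hw: "c 0 * (grad v0 (fst y) \<bullet> a + snd y \<bullet> b) + c 1 * (fst y \<bullet> b + a \<bullet> snd y) = 0" for a b
    proof -
      have "(\<Sum>i<2. c i * frechet_derivative (F i) (at y) (a, b)) = 0" using H by blast
      then show ?thesis by (simp add: numeral_2_eq_2 F0 F1 F0_frechet[OF dW] F1_frechet)
    qed
    have "\<not> (c 0 \<noteq> 0 \<or> c 1 \<noteq> 0)"
    proof
      assume ne: "c 0 \<noteq> 0 \<or> c 1 \<noteq> 0"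
      have key: "snd y \<bullet> snd y = fst y \<bullet> grad v0 (fst y)" by (rule indep_alg[OF Hw ne])
      have "E = (1/2) * (norm (snd y))\<^sup>2 + v0 (fst y)" using yE mech_ham_eq[of v0 y] by simp
      moreover have "(norm (snd y))\<^sup>2 = snd y \<bullet> snd y" by (rule power2_norm_eq_inner)
      ultimately have "E = v0 (fst y) + (1/2) * (fst y \<bullet> grad v0 (fst y))" using key by simp
      then show False using virial_strict[OF yE] by simp
    qed
    then show "\<forall>i<2. c i = 0" unfolding all2 by simp
  qed
  show ?thesis
    unfolding smooth_submanifold_def k_eq
  proof (intro conjI ballI)
    show "2 * CARD('n) - 2 \<le> DIM((real^'n) \<times> (real^'n))" unfolding dim_pp by simp
    fix x assume "x \<in> ?G"
    then show "\<exists>U (F::nat \<Rightarrow> (real^'n) \<times> (real^'n) \<Rightarrow> real). open U \<and> x \<in> U \<and> (\<forall>i<2. c_inf_on U (F i)) \<and>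
        (\<forall>y\<in>?G \<inter> U. \<forall>c. (\<forall>w. (\<Sum>i<2. c i * frechet_derivative (F i) (at y) w) = 0) \<longrightarrow> (\<forall>i<2. c i = 0)) \<and>
        ?G \<inter> U = {y \<in> U. \<forall>i<2. F i y = 0}"
      using ci seteq indep by (intro exI[of _ UNIV] exI[of _ F]) auto
  qed
qed

end

theorem lemma4p1:
  fixes v0 v :: "real^'n \<Rightarrow> real" and E R :: real
  assumes "CARD('n) \<ge> 2"
    and "c_inf_on UNIV v0"
    and "c_inf_on UNIV v" and "compact (supp v)"
    and "bdd_above (range (\<lambda>q. v0 q + (1/2) * (q \<bullet> grad v0 q)))"
    and "bdd_below (range v0)"
    and "\<not> critical_value v0 E"
    and "\<not> critical_value (\<lambda>q. v0 q + v q) E"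
    and "E > (SUP q. v0 q + (1/2) * (q \<bullet> grad v0 q))"
  shows "assumption1 (mech_ham v0) (mech_ham (\<lambda>q. v0 q + v q)) E \<and>
         assumption2 (mech_ham v0) E {(q, p). mech_ham v0 (q, p) = E \<and> q \<bullet> p = R}"
proof -
  have cW1: "c_inf_on UNIV (\<lambda>q. v0 q + v q)" by (rule c_inf_add[OF assms(2,3)])
  have dv: "v differentiable at q" for q using c_inf_diff[OF assms(3)] by auto
  have cv: "continuous_on UNIV v"
    using dv differentiable_imp_continuous_within continuous_at_imp_continuous_on by blast
  obtain B where B: "\<And>q. q \<in> supp v \<Longrightarrow> \<bar>v q\<bar> \<le> B"
  proof -
    have "bounded (v ` supp v)"
      by (intro compact_imp_bounded compact_continuous_image continuous_on_subset[OF cv] assms(4)) auto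
    then show ?thesis using that unfolding bounded_iff by auto
  qed
  have vb: "\<bar>v q\<bar> \<le> \<bar>B\<bar>" for q
  proof (cases "q \<in> supp v")
    case True then show ?thesis using B[OF True] by simp
  next
    case False
    have "q \<notin> {x. v x \<noteq> 0}"
      using False subsetD[OF closure_subset[of "{x. v x \<noteq> 0}"]] unfolding supp_def by blast
    then have "v q = 0" by simp
    then show ?thesis by simp
  qed
  obtain m where m: "\<And>q. m \<le> v0 q" using assms(6) unfolding bdd_below_def by auto
  have bddW1: "bdd_below (range (\<lambda>q. v0 q + v q))"
  proof (rule bdd_belowI)
    fix y assume "y \<in> range (\<lambda>q. v0 q + v q)"
    then obtain q where "y = v0 q + v q" by auto
    then show "m - \<bar>B\<bar> \<le> y" using m[of q] vb[of q] by linarith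
  qed
  interpret M0: mech v0 using assms(2,6) by unfold_locales
  interpret M1: mech "\<lambda>q. v0 q + v q" using cW1 bddW1 by unfold_locales
  interpret V: vir v0 E using assms(5,9) by unfold_locales
  have diffH: "(\<lambda>x. mech_ham (\<lambda>q. v0 q + v q) x - mech_ham v0 x) = (\<lambda>x. v (fst x))"
    by (auto simp: mech_ham_eq)
  have A1: "assumption1 (mech_ham v0) (mech_ham (\<lambda>q. v0 q + v q)) E"
    unfolding assumption1_def
  proof (intro conjI allI impI)
    show "frechet_derivative (mech_ham (\<lambda>q. v0 q + v q)) (at x) \<noteq> (\<lambda>_. 0)"
      if "mech_ham (\<lambda>q. v0 q + v q) x = E" for x
      by (rule dH_nonzero[OF M1.dW assms(8) that])
    show "frechet_derivative (mech_ham v0) (at x) \<noteq> (\<lambda>_. 0)" if "mech_ham v0 x = E" for x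
      by (rule dH_nonzero[OF M0.dW assms(7) that])
    show "flow_complete_on (ham_vf (mech_ham v0)) {x. mech_ham v0 x = E}"
      unfolding flow_complete_on_def using M0.curve_exists by blast
    show "flow_complete_on (ham_vf (mech_ham (\<lambda>q. v0 q + v q))) {x. mech_ham (\<lambda>q. v0 q + v q) x = E}"
      unfolding flow_complete_on_def using M1.curve_exists by blast
    show "\<exists>T>0. \<forall>x\<in>K. \<forall>t. T \<le> \<bar>t\<bar> \<longrightarrow> flow (ham_vf (mech_ham v0)) t x \<notin> K"
      if "compact K \<and> K \<subseteq> {x. mech_ham v0 x = E}" for K
      using V.nontrap that by blast
    show "compact ({x. mech_ham (\<lambda>q. v0 q + v q) x \<le> E} \<inter> supp (\<lambda>x. mech_ham (\<lambda>q. v0 q + v q) x - mech_ham v0 x))"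
      unfolding diffH supp_fst by (rule compact_part[OF M1.dW bddW1 assms(4)])
    show "compact ({x. mech_ham v0 x \<le> E} \<inter> supp (\<lambda>x. mech_ham (\<lambda>q. v0 q + v q) x - mech_ham v0 x))"
      unfolding diffH supp_fst by (rule compact_part[OF M0.dW assms(6) assms(4)])
  qed
  have A2: "assumption2 (mech_ham v0) E {(q, p). mech_ham v0 (q, p) = E \<and> q \<bullet> p = R}"
    unfolding assumption2_def
  proof (intro conjI allI impI ballI)
    show "{(q, p). mech_ham v0 (q, p) = E \<and> q \<bullet> p = R} \<subseteq> {x. mech_ham v0 x = E}" by auto
    show "smooth_submanifold {(q, p). mech_ham v0 (q, p) = E \<and> q \<bullet> p = R} (2 * CARD('n) - 2)"
      by (rule V.submanifold)
    show "ham_vf (mech_ham v0) x \<notin> tangent_space {(q, p). mech_ham v0 (q, p) = E \<and> q \<bullet> p = R} x"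
      if "x \<in> {(q, p). mech_ham v0 (q, p) = E \<and> q \<bullet> p = R}" for x
      by (rule V.tangent[OF that])
    show "\<exists>!zt. fst zt \<in> {(q, p). mech_ham v0 (q, p) = E \<and> q \<bullet> p = R} \<and>
            x = flow (ham_vf (mech_ham v0)) (snd zt) (fst zt)" if "mech_ham v0 x = E" for x
      by (rule V.sections_ex[OF that])
  qed
  show ?thesis using A1 A2 by blast
qed

end
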